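(* Let $r\ge 1$ and let $\mathcal{R}$ be a block of $\mathcal{A}_e^r$. Then there exists $M_\ast$ such that for every integer $M\ge M_\ast$, with $\mathbf{M}=(0,M,2M,\dots,(e-1)M)$, every element of $\Psi_r(\mathrm{Str}(\mathcal{R};\mathbf{M}))$ is a Rouquier partition, and $\Psi_r(\mathrm{Str}(\mathcal{R};\mathbf{M}))$ is contained in a single $r$-Rouquier block of $\mathcal{A}_e$.
   Context: Fix an integer $e\ge 2$. A partition is a weakly decreasing sequence $\lambda=(\lambda_1,\lambda_2,\dots)$ of non-negative integers with finite sum $|\lambda|$; $\Lambda$ denotes the set of partitions and $\Lambda^{(m)}$ the set of $m$-multipartitions, i.e. $m$-tuples $\boldsymbol\lambda=(\lambda^{(1)},\dots,\lambda^{(m)})$ of partitions, with $|\boldsymbol\lambda|=\sum_k|\lambda^{(k)}|$. A $\beta$-set is a subset $B\subseteq\mathbb{Z}$ containing all sufficiently small integers and no sufficiently large ones. For $\lambda\in\Lambda$ and $s\in\mathbb{Z}$ set $B_s(\lambda)=\{\lambda_i-i+s : i\ge 1\}$; every $\beta$-set equals $B_s(\lambda)$ for a unique pair $(\lambda,s)$. Let $\mathcal{A}_e=\Lambda\times\mathbb{Z}$ (abacus configurations with $e$ runners) and $\mathcal{A}_e^m=\Lambda^{(m)}\times\mathbb{Z}^m$, where $(\boldsymbol\lambda,\mathbf{s})$ is identified with the $m$-tuple of $\beta$-sets $(B_{s_1}(\lambda^{(1)}),\dots,B_{s_m}(\lambda^{(m)}))$. Blocks: for $(\boldsymbol\lambda,\mathbf{s})\in\mathcal{A}_e^m$,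 its $e$-residue multiset is the multiset of the values $s_k+y-x \bmod e$ over all nodes $(x,y,k)$ with $x\ge1$, $1\le y\le\lambda^{(k)}_x$, $1\le k\le m$. Define $(\boldsymbol\lambda,\mathbf{s})\approx_e(\boldsymbol\mu,\mathbf{s}')$ iff $\mathbf{s}=\mathbf{s}'$, $|\boldsymbol\lambda|=|\boldsymbol\mu|$ and the $e$-residue multisets coincide. Its equivalence classes are called blocks. The map $\eta$: for $(\lambda,s)\in\mathcal{A}_e$ with $B=B_s(\lambda)$ and $0\le i<e$, the set $C_i=\{(b-i)/e : b\in B,\ b\equiv i \bmod e\}$ is a $\beta$-set, so $C_i=B_{t_i}(\rho_i)$ for a unique $(\rho_i,t_i)\in\Lambda\times\mathbb{Z}$; set $\eta(\lambda,s)=((\rho_0,\dots,\rho_{e-1}),(t_0,\dots,t_{e-1}))$. The $e$-weight of $\lambda$ is $\mathrm{wt}(\lambda)=\sum_i|\rho_i|$. Rouquier: $(\lambda,s)\in\mathcal{A}_e$ with $\eta(\lambda,s)=(\boldsymbol\rho,\mathbf{t})$ is a Rouquier partition if $\mathrm{wt}(\lambda)\le t_{i+1}-t_i+1$ for all $0\le i<e-1$, and an $r$-Rouquier partition if $\mathrm{wt}(\lambda)\le t_{i+1}-t_i+r$ for all $0\le i<e-1$. A block of $\mathcal{A}_e$ is an $r$-Rouquier block if all its elements are $r$-Rouquier partitions. Uglov's map: for $1\le k\le r$ define $\psi_k:\mathbb{Z}\to\mathbb{Z}$ by $\psi_k(ae+i)=((a+1)r-k)e+i$ for $a\in\mathbb{Z}$,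 $0\le i<e$. For $(\boldsymbol\lambda,\mathbf{s})\in\mathcal{A}_e^r$ the set $B=\bigsqcup_{k=1}^r\psi_k(B_{s_k}(\lambda^{(k)}))$ is a $\beta$-set, and $\Psi_r(\boldsymbol\lambda,\mathbf{s})$ is the unique $(\tilde\lambda,\tilde s)\in\mathcal{A}_e$ with $B_{\tilde s}(\tilde\lambda)=B$. Stretching: for $\mathbf{M}\in\mathbb{Z}^e$ and $(\lambda,s)\in\mathcal{A}_e$ with $\eta(\lambda,s)=(\boldsymbol\rho,(t_0,\dots,t_{e-1}))$, $\mathrm{Str}((\lambda,s);\mathbf{M})$ is the unique element of $\mathcal{A}_e$ whose image under $\eta$ is $(\boldsymbol\rho,(t_0+M_0,\dots,t_{e-1}+M_{e-1}))$. For $(\boldsymbol\lambda,\mathbf{s})\in\mathcal{A}_e^r$, $\mathrm{Str}((\boldsymbol\lambda,\mathbf{s});\mathbf{M})$ is obtained by applying this to each component $(\lambda^{(k)},s_k)$; for a subset $\mathcal{R}$, $\mathrm{Str}(\mathcal{R};\mathbf{M})$ is its image. *)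

theory Defs
  imports Main "HOL-Library.Multiset"
begin

(* A partition is represented by the list of its nonzero parts, weakly decreasing. *)
type_synonym config = "nat list \<times> int"   (* element (lambda, s) of A_e *)

definition is_partition :: "nat list \<Rightarrow> bool" where
  "is_partition xs \<longleftrightarrow> sorted_wrt (\<lambda>a b. b \<le> a) xs \<and> 0 \<notin> set xs"

definition part_nth :: "nat list \<Rightarrow> nat \<Rightarrow> nat" where
  "part_nth xs i = (if 1 \<le> i \<and> i \<le> length xs then xs ! (i - 1) else 0)"

definition part_size :: "nat list \<Rightarrow> nat" where
  "part_size xs = sum_list xs"

definition beta :: "int \<Rightarrow> nat list \<Rightarrow> int set" where
  "beta s xs = {int (part_nth xs i) - int i + s | i. i \<ge> 1}"

definition valid_conf :: "config \<Rightarrow> bool" where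
  "valid_conf c \<longleftrightarrow> is_partition (fst c)"

definition conf_beta :: "config \<Rightarrow> int set" where
  "conf_beta c = beta (snd c) (fst c)"

definition of_beta :: "int set \<Rightarrow> config" where
  "of_beta B = (THE c. valid_conf c \<and> conf_beta c = B)"

definition eta :: "nat \<Rightarrow> config \<Rightarrow> config list" where
  "eta e c = map (\<lambda>i. of_beta {(b - int i) div int e | b. b \<in> conf_beta c \<and> b mod int e = int i}) [0..<e]"

definition wt :: "nat \<Rightarrow> config \<Rightarrow> nat" where
  "wt e c = sum_list (map (\<lambda>p. part_size (fst p)) (eta e c))"

definition rouquier_r :: "nat \<Rightarrow> nat \<Rightarrow> config \<Rightarrow> bool" where
  "rouquier_r e r c \<longleftrightarrow>
     (\<forall>i. i + 1 < e \<longrightarrow> int (wt e c) \<le> snd (eta e c ! (i + 1)) - snd (eta e c ! i) + int r)"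

definition rouquier :: "nat \<Rightarrow> config \<Rightarrow> bool" where
  "rouquier e c \<longleftrightarrow> rouquier_r e 1 c"

(* Stretching by M = (M_0,...,M_{e-1}), given as a function on indices *)
definition str1 :: "nat \<Rightarrow> (nat \<Rightarrow> int) \<Rightarrow> config \<Rightarrow> config" where
  "str1 e Ms c = (THE d. valid_conf d \<and>
      eta e d = map (\<lambda>i. (fst (eta e c ! i), snd (eta e c ! i) + Ms i)) [0..<e])"

definition str_multi :: "nat \<Rightarrow> (nat \<Rightarrow> int) \<Rightarrow> config list \<Rightarrow> config list" where
  "str_multi e Ms cs = map (str1 e Ms) cs"

(* Uglov's map; an element of A_e^r is a list of r configurations, k-th component at index k-1 *)
definition psi :: "nat \<Rightarrow> nat \<Rightarrow> nat \<Rightarrow> int \<Rightarrow> int" where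
  "psi e r k x = ((x div int e + 1) * int r - int k) * int e + x mod int e"

definition Psi :: "nat \<Rightarrow> nat \<Rightarrow> config list \<Rightarrow> config" where
  "Psi e r cs = of_beta (\<Union>k\<in>{1..r}. psi e r k ` conf_beta (cs ! (k - 1)))"

definition res_mset :: "nat \<Rightarrow> config \<Rightarrow> int multiset" where
  "res_mset e c = (\<Sum>x\<in>{1..length (fst c)}.
      mset (map (\<lambda>y. (snd c + int y - int x) mod int e) [1..<part_nth (fst c) x + 1]))"

definition multi_equiv :: "nat \<Rightarrow> config list \<Rightarrow> config list \<Rightarrow> bool" where
  "multi_equiv e cs ds \<longleftrightarrow>
     map snd cs = map snd ds \<and>
     sum_list (map (\<lambda>c. part_size (fst c)) cs) = sum_list (map (\<lambda>c. part_size (fst c)) ds) \<and>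
     sum_list (map (res_mset e) cs) = sum_list (map (res_mset e) ds)"

definition valid_multi :: "nat \<Rightarrow> config list \<Rightarrow> bool" where
  "valid_multi m cs \<longleftrightarrow> length cs = m \<and> (\<forall>c\<in>set cs. valid_conf c)"

definition block_multi :: "nat \<Rightarrow> nat \<Rightarrow> config list \<Rightarrow> config list set" where
  "block_multi e m x = {y. valid_multi m y \<and> multi_equiv e x y}"

definition block1 :: "nat \<Rightarrow> config \<Rightarrow> config set" where
  "block1 e z = {w. valid_conf w \<and> multi_equiv e [z] [w]}"

definition is_rRouquier_block :: "nat \<Rightarrow> nat \<Rightarrow> config set \<Rightarrow> bool" where
  "is_rRouquier_block e r C \<longleftrightarrow>
     (\<exists>z. valid_conf z \<and> C = block1 e z) \<and> (\<forall>w\<in>C. rouquier_r e r w)"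

end

theory Submission
  imports Defs
begin

definition bn :: "nat list \<Rightarrow> int \<Rightarrow> nat \<Rightarrow> int" where
  "bn xs s x = int (part_nth xs x) - int x + s"

lemma pn_pos: "is_partition xs \<Longrightarrow> 1 \<le> x \<Longrightarrow> x \<le> length xs \<Longrightarrow> part_nth xs x \<ge> 1"
proof -
  assume a: "is_partition xs" "1 \<le> x" "x \<le> length xs"
  then have "xs ! (x-1) \<in> set xs" by auto
  then have "xs ! (x-1) \<noteq> 0" using a(1) unfolding is_partition_def by metis
  then show ?thesis using a unfolding part_nth_def by auto
qed

lemma pn_zero: "length xs < x \<Longrightarrow> part_nth xs x = 0"
  unfolding part_nth_def by auto

lemma pn_mono: assumes "is_partition xs" "1 \<le> x" "x \<le> y" shows "part_nth xs y \<le> part_nth xs x"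
proof (cases "y \<le> length xs")
  case True
  have s: "sorted_wrt (\<lambda>a b. b \<le> a) xs" using assms(1) unfolding is_partition_def by simp
  show ?thesis
  proof (cases "x = y")
    case False
    then have "x - 1 < y - 1" using assms by auto
    then have "xs ! (y-1) \<le> xs ! (x-1)" using s True assms unfolding sorted_wrt_iff_nth_less by auto
    then show ?thesis using True assms unfolding part_nth_def by auto
  qed simp
next
  case False then show ?thesis by (simp add: pn_zero)
qed

lemma bn_strict: "is_partition xs \<Longrightarrow> 1 \<le> x \<Longrightarrow> x < y \<Longrightarrow> bn xs s y < bn xs s x"
  unfolding bn_def using pn_mono[of xs x y] by auto

lemma beta_eq: assumes "is_partition xs"
  shows "beta s xs = bn xs s ` {1..length xs} \<union> {..< s - int (length xs)}"
proof -
  have "beta s xs = bn xs s ` {1..}" unfolding beta_def bn_def by auto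
  also have "\<dots> = bn xs s ` {1..length xs} \<union> {..< s - int (length xs)}"
  proof (intro equalityI subsetI)
    fix z assume "z \<in> bn xs s ` {1..}"
    then obtain i where i: "i \<ge> 1" "z = bn xs s i" by auto
    show "z \<in> bn xs s ` {1..length xs} \<union> {..< s - int (length xs)}"
    proof (cases "i \<le> length xs")
      case True then show ?thesis using i by auto
    next
      case False then show ?thesis using i by (auto simp: bn_def pn_zero)
    qed
  next
    fix z assume z: "z \<in> bn xs s ` {1..length xs} \<union> {..< s - int (length xs)}"
    show "z \<in> bn xs s ` {1..}"
    proof (cases "z < s - int (length xs)")
      case True
      define i where "i = nat (s - z)"
      have "i > length xs" "i \<ge> 1" using True by (auto simp: i_def)
      then have "bn xs s i = z" by (auto simp: bn_def pn_zero i_def)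
      then show ?thesis using \<open>i \<ge> 1\<close> by force
    next
      case False then show ?thesis using z by auto
    qed
  qed
  finally show ?thesis .
qed

lemma bn_low: "is_partition xs \<Longrightarrow> 1 \<le> x \<Longrightarrow> x \<le> length xs \<Longrightarrow> bn xs s x > s - int (length xs)"
  unfolding bn_def using pn_pos[of xs x] by auto

lemma gap_not_in: assumes "is_partition xs" shows "s - int (length xs) \<notin> beta s xs"
proof
  assume "s - int (length xs) \<in> beta s xs"
  then obtain i where "i \<in> {1..length xs}" "s - int (length xs) = bn xs s i"
    unfolding beta_eq[OF assms] by auto
  then show False using bn_low[OF assms, of i s] by auto
qed

lemma below_in: assumes "is_partition xs" "z < s - int (length xs)" shows "z \<in> beta s xs"
  using assms unfolding beta_eq[OF assms(1)] by auto

lemma beta_bound: assumes "is_partition xs" "z \<in> beta s xs" shows "z < s + int (part_nth xs 1)"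
proof -
  obtain i where "i \<ge> 1" "z = bn xs s i" using assms(2) unfolding beta_def bn_def by auto
  then show ?thesis using pn_mono[OF assms(1), of 1 i] unfolding bn_def by auto
qed

definition betaset :: "int set \<Rightarrow> bool" where
  "betaset B \<longleftrightarrow> (\<exists>U. \<forall>x\<in>B. x < U) \<and> (\<exists>L. \<forall>x<L. x \<in> B)"

lemma conf_betaset: "valid_conf c \<Longrightarrow> betaset (conf_beta c)"
  unfolding betaset_def conf_beta_def valid_conf_def
  using beta_bound below_in by blast

lemma upt1: "set [1..<n+1] = {1..n}" by auto

lemma bn_inj: "is_partition xs \<Longrightarrow> inj_on (bn xs s) {1..n}"
  unfolding inj_on_def
  by (metis atLeastAtMost_iff bn_strict less_irrefl nat_neq_iff)

lemma beta_upper: assumes "is_partition xs"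
  shows "beta s xs \<inter> {s - int (length xs)<..} = bn xs s ` {1..length xs}"
  using bn_low[OF assms] unfolding beta_eq[OF assms] by auto

lemma dec_list: assumes "is_partition xs"
  shows "sorted_wrt (<) (rev (map (bn xs s) [1..<length xs + 1]))"
  unfolding sorted_wrt_rev sorted_wrt_map
proof -
  have "sorted_wrt (<) [1..<length xs + 1]" by (rule sorted_wrt_upt)
  then show "sorted_wrt (\<lambda>x y. bn xs s y < bn xs s x) [1..<length xs + 1]"
    by (rule sorted_wrt_mono_rel[rotated]) (auto intro: bn_strict[OF assms])
qed

lemma conf_beta_inj: assumes "valid_conf c" "valid_conf d" "conf_beta c = conf_beta d"
  shows "c = d"
proof -
  obtain xs s where c: "c = (xs, s)" by (cases c)
  obtain ys t where d: "d = (ys, t)" by (cases d)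
  have px: "is_partition xs" and py: "is_partition ys" using assms c d by (auto simp: valid_conf_def)
  have B: "beta s xs = beta t ys" using assms(3) c d by (simp add: conf_beta_def)
  have m: "s - int (length xs) = t - int (length ys)"
  proof (rule ccontr)
    assume "s - int (length xs) \<noteq> t - int (length ys)"
    then consider "s - int (length xs) < t - int (length ys)" | "t - int (length ys) < s - int (length xs)" by linarith
    then show False
    proof cases
      case 1 then show False using below_in[OF py 1] gap_not_in[OF px] B by auto
    next
      case 2 then show False using below_in[OF px 2] gap_not_in[OF py] B by auto
    qed
  qed
  have im: "bn xs s ` {1..length xs} = bn ys t ` {1..length ys}"
    using beta_upper[OF px, of s] beta_upper[OF py, of t] B m by simp
  have "card (bn xs s ` {1..length xs}) = length xs" using card_image[OF bn_inj[OF px]] by simp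
  moreover have "card (bn ys t ` {1..length ys}) = length ys" using card_image[OF bn_inj[OF py]] by simp
  ultimately have len: "length xs = length ys" using im by simp
  then have st: "s = t" using m by simp
  have "rev (map (bn ys t) [1..<length ys + 1]) = rev (map (bn xs s) [1..<length xs + 1])"
    apply (rule strict_sorted_equal[OF dec_list[OF px] dec_list[OF py]])
    using im by (simp only: set_rev set_map upt1)
  then have L: "map (bn ys t) [1..<length ys + 1] = map (bn xs s) [1..<length xs + 1]" by simp
  have "xs = ys"
  proof (rule nth_equalityI)
    show "length xs = length ys" by (rule len)
    fix i assume i: "i < length xs"
    have "bn ys t (i+1) = bn xs s (i+1)" using arg_cong[OF L, of "\<lambda>l. l ! i"] i len by (simp del: upt_Suc)
    then show "xs ! i = ys ! i" using i len st by (simp add: bn_def part_nth_def)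
  qed
  then show ?thesis using c d st by simp
qed

lemma dec_gap: assumes "sorted_wrt (>) (xs::int list)" "i \<le> j" "j < length xs"
  shows "xs ! j + int (j - i) \<le> xs ! i"
  using assms(2,3)
proof (induction j rule: dec_induct)
  case base then show ?case by simp
next
  case (step j)
  have "xs ! (Suc j) < xs ! j" using assms(1) step unfolding sorted_wrt_iff_nth_less by auto
  then show ?case using step by auto
qed

lemma betaset_ex: assumes "betaset B" shows "\<exists>c. valid_conf c \<and> conf_beta c = B"
proof -
  obtain U L where U: "\<forall>x\<in>B. x < U" and L: "\<forall>x<L. x \<in> B" using assms unfolding betaset_def by auto
  have UL: "L \<le> U" using U L by force
  define P where "P k = (L + int k \<notin> B)" for k
  have PU: "P (nat (U - L))" using U UL unfolding P_def by auto
  define k0 where "k0 = (LEAST k. P k)"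
  have Pk0: "P k0" unfolding k0_def by (rule LeastI[of P, OF PU])
  define m where "m = L + int k0"
  have mB: "m \<notin> B" using Pk0 unfolding P_def m_def by auto
  have belowm: "x \<in> B" if "x < m" for x
  proof (cases "x < L")
    case True then show ?thesis using L by auto
  next
    case False
    define k where "k = nat (x - L)"
    have "k < k0" using False that unfolding k_def m_def by auto
    then have "\<not> P k" unfolding k0_def using not_less_Least by blast
    then show ?thesis using False unfolding P_def k_def by auto
  qed
  define F where "F = B \<inter> {m<..}"
  have "F \<subseteq> {m<..<U}" using U unfolding F_def by auto
  then have finF: "finite F" using finite_subset by blast
  define l where "l = sorted_list_of_set F"
  have l: "sorted_wrt (<) l" "set l = F" unfolding l_def
    using sorted_list_of_set.strict_sorted_key_list_of_set[of F] set_sorted_list_of_set[OF finF] by simp_all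
  define xs where "xs = rev l"
  have xsd: "sorted_wrt (>) xs" unfolding xs_def sorted_wrt_rev using l(1) by simp
  have xsF: "set xs = F" unfolding xs_def using l by simp
  define n where "n = length xs"
  define s where "s = m + int n"
  define lam where "lam = map (\<lambda>k. nat (xs ! k + int k + 1 - s)) [0..<n]"
  have lowx: "xs ! k \<ge> m + int (n - k)" if "k < n" for k
  proof -
    have "xs ! (n - 1) \<in> set xs" using that unfolding n_def by (intro nth_mem) simp
    then have "xs ! (n - 1) \<in> F" using xsF by simp
    then have "xs ! (n-1) > m" unfolding F_def by auto
    moreover have "xs ! (n-1) + int (n - 1 - k) \<le> xs ! k" using dec_gap[OF xsd, of k "n-1"] that n_def by auto
    ultimately show ?thesis using that by auto
  qed
  have lamk: "lam ! k = nat (xs ! k + int k + 1 - s)" if "k < n" for k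
    using that unfolding lam_def by simp
  have lampos: "xs ! k + int k + 1 - s \<ge> 1" if "k < n" for k
    using lowx[OF that] that unfolding s_def by auto
  have lenl: "length lam = n" unfolding lam_def by simp
  have part: "is_partition lam"
    unfolding is_partition_def
  proof
    show "sorted_wrt (\<lambda>a b. b \<le> a) lam"
      unfolding sorted_wrt_iff_nth_less
    proof (intro allI impI)
      fix i j assume ij: "i < j" "j < length lam"
      have "xs ! j + int (j - i) \<le> xs ! i" using dec_gap[OF xsd, of i j] ij lenl n_def by auto
      then show "lam ! j \<le> lam ! i" using ij lenl lamk by (simp add: nat_mono)
    qed
    show "0 \<notin> set lam"
    proof
      assume "0 \<in> set lam"
      then obtain k where "k < n" "lam ! k = 0" using lenl by (auto simp: in_set_conv_nth)
      then show False using lampos[of k] lamk[of k] by auto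
    qed
  qed
  have bnx: "bn lam s x = xs ! (x - 1)" if "1 \<le> x" "x \<le> n" for x
  proof -
    have k: "x - 1 < n" using that by auto
    have e: "int (x-1) = int x - 1" using that by auto
    have "lam ! (x-1) = nat (xs ! (x-1) + int x - s)" "xs ! (x-1) + int x - s \<ge> 1"
      using lampos[OF k] lamk[OF k] e by auto
    then show ?thesis using that lenl unfolding bn_def part_nth_def by auto
  qed
  have "bn lam s ` {1..n} = set xs"
  proof (intro equalityI subsetI)
    fix y assume "y \<in> bn lam s ` {1..n}"
    then obtain x where x: "x \<in> {1..n}" "y = bn lam s x" by auto
    then have "y = xs ! (x - 1)" using bnx by auto
    then show "y \<in> set xs" using x n_def by auto
  next
    fix y assume "y \<in> set xs"
    then obtain k where k: "k < n" "y = xs ! k" by (auto simp: in_set_conv_nth n_def)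
    then have "y = bn lam s (k+1)" using bnx[of "k+1"] by simp
    then show "y \<in> bn lam s ` {1..n}" using k by auto
  qed
  moreover have "s - int n = m" unfolding s_def by simp
  moreover have "F \<union> {..<m} = B"
  proof (intro equalityI subsetI)
    fix x assume "x \<in> B"
    then show "x \<in> F \<union> {..<m}" using mB unfolding F_def by (cases "x < m") (auto simp: not_less le_less)
  qed (use belowm F_def in auto)
  ultimately have "beta s lam = B"
    unfolding beta_eq[OF part] lenl using xsF by simp
  then show ?thesis using part by (intro exI[of _ "(lam, s)"]) (simp add: valid_conf_def conf_beta_def)
qed

lemma of_beta_props: assumes "betaset B" shows "valid_conf (of_beta B)" "conf_beta (of_beta B) = B"
proof -
  obtain c where c: "valid_conf c" "conf_beta c = B" using betaset_ex[OF assms] by auto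
  have "of_beta B = c" unfolding of_beta_def
  proof (rule the_equality)
    show "valid_conf c \<and> conf_beta c = B" using c by simp
    fix d assume "valid_conf d \<and> conf_beta d = B"
    then show "d = c" using conf_beta_inj[of d c] c by simp
  qed
  then show "valid_conf (of_beta B)" "conf_beta (of_beta B) = B" using c by auto
qed

lemma of_beta_conf: assumes "valid_conf c" shows "of_beta (conf_beta c) = c"
proof -
  have "betaset (conf_beta c)" using conf_betaset[OF assms] .
  from of_beta_props[OF this] show ?thesis using conf_beta_inj[OF _ assms] by blast
qed

lemma conf_beta_shift: "conf_beta (fst c, snd c + d) = (\<lambda>x. x + d) ` conf_beta c"
proof -
  have "beta (s + d) xs = (\<lambda>x. x + d) ` beta s xs" for s xs
    unfolding beta_def by (auto simp: image_iff)
  then show ?thesis unfolding conf_beta_def by simp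
qed

lemma of_beta_shift: assumes "betaset B"
  shows "of_beta ((\<lambda>x. x + d) ` B) = (fst (of_beta B), snd (of_beta B) + d)"
proof -
  have v: "valid_conf (fst (of_beta B), snd (of_beta B) + d)"
    using of_beta_props(1)[OF assms] by (simp add: valid_conf_def)
  show ?thesis using of_beta_conf[OF v] conf_beta_shift[of "of_beta B" d] of_beta_props(2)[OF assms] by simp
qed

definition runner :: "nat \<Rightarrow> nat \<Rightarrow> int set \<Rightarrow> int set" where
  "runner e i B = {c. c * int e + int i \<in> B}"

lemma runner_eq: assumes "e > 0" "i < e"
  shows "{(b - int i) div int e | b. b \<in> B \<and> b mod int e = int i} = runner e i B"
proof (intro equalityI subsetI)
  fix c assume "c \<in> {(b - int i) div int e | b. b \<in> B \<and> b mod int e = int i}"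
  then obtain b where b: "b \<in> B" "b mod int e = int i" "c = (b - int i) div int e" by auto
  have "b = (b div int e) * int e + int i" using b(2) by (metis div_mult_mod_eq)
  then have "b - int i = (b div int e) * int e" by simp
  then have "c = b div int e" using b(3) assms by simp
  then show "c \<in> runner e i B" unfolding runner_def using b \<open>b = _\<close> by simp
next
  fix c assume "c \<in> runner e i B"
  then have "c * int e + int i \<in> B" unfolding runner_def by simp
  moreover have "(c * int e + int i) mod int e = int i" using assms by simp
  moreover have "(c * int e + int i - int i) div int e = c" using assms by simp
  ultimately show "c \<in> {(b - int i) div int e | b. b \<in> B \<and> b mod int e = int i}" by force
qed

lemma runner_betaset: assumes "betaset B" "e > 0" "i < e" shows "betaset (runner e i B)"
proof -
  obtain U L where U: "\<forall>x\<in>B. x < U" and L: "\<forall>x<L. x \<in> B" using assms unfolding betaset_def by auto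
  have "\<forall>c\<in>runner e i B. c < \<bar>U\<bar> + 1"
  proof
    fix c assume "c \<in> runner e i B"
    then have "c * int e + int i < U" using U unfolding runner_def by auto
    moreover have "c \<le> c * int e" if "c \<ge> 0" using that assms by (simp add: mult_le_cancel_left1)
    ultimately show "c < \<bar>U\<bar> + 1" by (cases "c \<ge> 0") auto
  qed
  moreover have "\<forall>c < - \<bar>L\<bar>. c \<in> runner e i B"
  proof (intro allI impI)
    fix c assume c: "c < - \<bar>L\<bar>"
    have "(c + 1) * (int e - 1) \<le> 0" using c assms by (intro mult_nonpos_nonneg) auto
    then have "(c + 1) * int e \<le> c + 1" by (simp add: algebra_simps)
    then have "c * int e + int i < L" using assms c by (auto simp: algebra_simps)
    then show "c \<in> runner e i B" using L unfolding runner_def by auto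
  qed
  ultimately show ?thesis unfolding betaset_def by blast
qed

definition comb :: "nat \<Rightarrow> (nat \<Rightarrow> int set) \<Rightarrow> int set" where
  "comb e C = {b. b div int e \<in> C (nat (b mod int e))}"

lemma comb_runner: assumes "e > 0" shows "comb e (\<lambda>i. runner e i B) = B"
proof -
  have "b div int e * int e + int (nat (b mod int e)) = b" for b using assms by simp
  then show ?thesis unfolding comb_def runner_def by auto
qed

lemma comb_cong: assumes "e > 0" "\<And>i. i < e \<Longrightarrow> C i = D i" shows "comb e C = comb e D"
proof -
  have "nat (b mod int e) < e" for b using assms(1) by (simp add: nat_less_iff)
  then show ?thesis unfolding comb_def using assms(2) by auto
qed

lemma eta_len: "length (eta e c) = e" unfolding eta_def by simp

lemma eta_nth: assumes "e > 0" "i < e" shows "eta e c ! i = of_beta (runner e i (conf_beta c))"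
  unfolding eta_def using assms runner_eq[OF assms] by simp

lemma eta_inj: assumes "e > 0" "valid_conf c" "valid_conf d" "eta e c = eta e d" shows "c = d"
proof -
  have "runner e i (conf_beta c) = runner e i (conf_beta d)" if "i < e" for i
  proof -
    have "of_beta (runner e i (conf_beta c)) = of_beta (runner e i (conf_beta d))"
      using eta_nth[OF assms(1) that] assms(4) by metis
    then show ?thesis
      using of_beta_props(2)[OF runner_betaset[OF conf_betaset[OF assms(2)] assms(1) that]]
            of_beta_props(2)[OF runner_betaset[OF conf_betaset[OF assms(3)] assms(1) that]] by metis
  qed
  then have "comb e (\<lambda>i. runner e i (conf_beta c)) = comb e (\<lambda>i. runner e i (conf_beta d))"
    by (intro comb_cong assms(1)) auto
  then have "conf_beta c = conf_beta d" unfolding comb_runner[OF assms(1)] .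
  then show ?thesis using conf_beta_inj assms by blast
qed

definition sig :: "nat \<Rightarrow> (nat \<Rightarrow> int) \<Rightarrow> int \<Rightarrow> int" where
  "sig e Ms b = b + int e * Ms (nat (b mod int e))"

lemma sig_mod: "sig e Ms b mod int e = b mod int e"
  unfolding sig_def by simp

lemma runner_sig: assumes "e > 0" "i < e"
  shows "runner e i (sig e Ms ` B) = (\<lambda>x. x + Ms i) ` runner e i B"
proof (intro equalityI subsetI)
  fix c assume "c \<in> runner e i (sig e Ms ` B)"
  then obtain b where b: "b \<in> B" "c * int e + int i = sig e Ms b" unfolding runner_def by auto
  have "b mod int e = int i" using arg_cong[OF b(2), of "\<lambda>x. x mod int e"] sig_mod[of e Ms b] assms by simp
  then have "nat (b mod int e) = i" by simp
  then have "b = (c - Ms i) * int e + int i" using b(2) unfolding sig_def by (simp add: algebra_simps)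
  then have "c - Ms i \<in> runner e i B" using b(1) unfolding runner_def by simp
  then show "c \<in> (\<lambda>x. x + Ms i) ` runner e i B" by (intro image_eqI[of _ _ "c - Ms i"]) auto
next
  fix c assume "c \<in> (\<lambda>x. x + Ms i) ` runner e i B"
  then obtain a where a: "a * int e + int i \<in> B" "c = a + Ms i" unfolding runner_def by auto
  have "(a * int e + int i) mod int e = int i" using assms by simp
  then have "sig e Ms (a * int e + int i) = c * int e + int i" unfolding sig_def a(2) by (simp add: algebra_simps)
  then show "c \<in> runner e i (sig e Ms ` B)" unfolding runner_def using a(1) by (metis imageI mem_Collect_eq)
qed

lemma sig_betaset: assumes "betaset B" "e > 0" shows "betaset (sig e Ms ` B)"
proof -
  obtain U L where U: "\<forall>x\<in>B. x < U" and L: "\<forall>x<L. x \<in> B" using assms unfolding betaset_def by auto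
  define K where "K = (\<Sum>i<e. \<bar>Ms i\<bar>)"
  have bnd: "\<bar>Ms (nat (b mod int e))\<bar> \<le> K" for b
  proof -
    have "nat (b mod int e) \<in> {..<e}" using assms(2) by (simp add: nat_less_iff)
    then show ?thesis unfolding K_def by (intro member_le_sum) auto
  qed
  have shift: "\<bar>int e * Ms (nat (b mod int e))\<bar> \<le> int e * K" for b
    using bnd[of b] by (simp add: abs_mult mult_left_mono)
  have "\<forall>x\<in>sig e Ms ` B. x < U + int e * K"
  proof
    fix x assume "x \<in> sig e Ms ` B"
    then obtain b where "b \<in> B" "x = sig e Ms b" by auto
    then show "x < U + int e * K" using U shift[of b] unfolding sig_def by fastforce
  qed
  moreover have "\<forall>x < L - int e * K. x \<in> sig e Ms ` B"
  proof (intro allI impI)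
    fix x assume x: "x < L - int e * K"
    define b where "b = x - int e * Ms (nat (x mod int e))"
    have "b = x + (- Ms (nat (x mod int e))) * int e" unfolding b_def by (simp add: algebra_simps)
    then have bm: "b mod int e = x mod int e" by (simp only: mod_mult_self1)
    have "sig e Ms b = x" unfolding sig_def bm by (simp add: b_def)
    moreover have "b < L" using x shift[of x] unfolding b_def by auto
    ultimately show "x \<in> sig e Ms ` B" using L by (metis imageI)
  qed
  ultimately show ?thesis unfolding betaset_def by blast
qed

lemma str1_eq: assumes "e > 0" "valid_conf c"
  shows "valid_conf (str1 e Ms c)" "conf_beta (str1 e Ms c) = sig e Ms ` conf_beta c"
    "eta e (str1 e Ms c) = map (\<lambda>i. (fst (eta e c ! i), snd (eta e c ! i) + Ms i)) [0..<e]"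
proof -
  define B where "B = conf_beta c"
  have bB: "betaset B" unfolding B_def by (rule conf_betaset[OF assms(2)])
  have sB: "betaset (sig e Ms ` B)" by (rule sig_betaset[OF bB assms(1)])
  define d0 where "d0 = of_beta (sig e Ms ` B)"
  have v0: "valid_conf d0" and c0: "conf_beta d0 = sig e Ms ` B" using of_beta_props[OF sB] d0_def by auto
  have e0: "eta e d0 = map (\<lambda>i. (fst (eta e c ! i), snd (eta e c ! i) + Ms i)) [0..<e]"
  proof (rule nth_equalityI)
    show "length (eta e d0) = length (map (\<lambda>i. (fst (eta e c ! i), snd (eta e c ! i) + Ms i)) [0..<e])"
      by (simp add: eta_len)
    fix i assume "i < length (eta e d0)"
    then have i: "i < e" by (simp add: eta_len)
    have "eta e d0 ! i = of_beta ((\<lambda>x. x + Ms i) ` runner e i B)"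
      using eta_nth[OF assms(1) i] c0 runner_sig[OF assms(1) i] by simp
    also have "\<dots> = (fst (of_beta (runner e i B)), snd (of_beta (runner e i B)) + Ms i)"
      by (rule of_beta_shift[OF runner_betaset[OF bB assms(1) i]])
    finally show "eta e d0 ! i = map (\<lambda>i. (fst (eta e c ! i), snd (eta e c ! i) + Ms i)) [0..<e] ! i"
      using i eta_nth[OF assms(1) i, of c] B_def by simp
  qed
  have "str1 e Ms c = d0" unfolding str1_def
  proof (rule the_equality)
    show "valid_conf d0 \<and> eta e d0 = map (\<lambda>i. (fst (eta e c ! i), snd (eta e c ! i) + Ms i)) [0..<e]"
      using v0 e0 by simp
    fix d assume "valid_conf d \<and> eta e d = map (\<lambda>i. (fst (eta e c ! i), snd (eta e c ! i) + Ms i)) [0..<e]"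
    then show "d = d0" using eta_inj[OF assms(1), of d d0] v0 e0 by simp
  qed
  then show "valid_conf (str1 e Ms c)" "conf_beta (str1 e Ms c) = sig e Ms ` conf_beta c"
    "eta e (str1 e Ms c) = map (\<lambda>i. (fst (eta e c ! i), snd (eta e c ! i) + Ms i)) [0..<e]"
    using v0 c0 e0 B_def by auto
qed

lemma cut_le: assumes "is_partition xs" "\<forall>x<N. x \<in> beta s xs" shows "N \<le> s - int (length xs)"
  using gap_not_in[OF assms(1), of s] assms(2) by force

lemma cut_set: assumes "is_partition xs" "\<forall>x<N. x \<in> beta s xs"
  shows "beta s xs \<inter> {N..} = bn xs s ` {1..length xs} \<union> {N..<s - int (length xs)}"
proof -
  have "bn xs s x \<ge> N" if "x \<in> {1..length xs}" for x
    using bn_low[OF assms(1), of x s] cut_le[OF assms] that by auto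
  then show ?thesis unfolding beta_eq[OF assms(1)] by auto
qed

lemma cut_fin: assumes "is_partition xs" "\<forall>x<N. x \<in> beta s xs" shows "finite (beta s xs \<inter> {N..})"
  unfolding cut_set[OF assms] by simp

lemma cut_disj: assumes "is_partition xs"
  shows "bn xs s ` {1..length xs} \<inter> {N..<s - int (length xs)} = {}"
proof -
  have "bn xs s x \<notin> {N..<s - int (length xs)}" if "x \<in> {1..length xs}" for x
    using bn_low[OF assms, of x s] that by auto
  then show ?thesis by blast
qed

lemma cut_card: assumes "is_partition xs" "\<forall>x<N. x \<in> beta s xs"
  shows "int (card (beta s xs \<inter> {N..})) = s - N"
proof -
  have "card (beta s xs \<inter> {N..}) = card (bn xs s ` {1..length xs}) + card {N..<s - int (length xs)}"
    unfolding cut_set[OF assms] by (rule card_Un_disjoint) (use cut_disj[OF assms(1)] in auto)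
  also have "\<dots> = length xs + nat (s - int (length xs) - N)"
    using card_image[OF bn_inj[OF assms(1)]] by simp
  finally show ?thesis using cut_le[OF assms] by simp
qed

lemma cut_sum: fixes f :: "int \<Rightarrow> int" assumes "is_partition xs" "\<forall>x<N. x \<in> beta s xs"
  shows "(\<Sum>b\<in>beta s xs \<inter> {N..}. f b) - (\<Sum>p\<in>{N..<s}. f p)
       = (\<Sum>x\<in>{1..length xs}. f (bn xs s x) - f (s - int x))"
proof -
  let ?n = "length xs"
  have le: "N \<le> s - int ?n" by (rule cut_le[OF assms])
  have "(\<Sum>b\<in>beta s xs \<inter> {N..}. f b) = (\<Sum>b\<in>bn xs s ` {1..?n}. f b) + (\<Sum>p\<in>{N..<s - int ?n}. f p)"
    unfolding cut_set[OF assms] by (rule sum.union_disjoint) (use cut_disj[OF assms(1)] in auto)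
  also have "(\<Sum>b\<in>bn xs s ` {1..?n}. f b) = (\<Sum>x\<in>{1..?n}. f (bn xs s x))"
    by (rule sum.reindex_cong[OF bn_inj[OF assms(1)] refl refl])
  finally have 1: "(\<Sum>b\<in>beta s xs \<inter> {N..}. f b) = (\<Sum>x\<in>{1..?n}. f (bn xs s x)) + (\<Sum>p\<in>{N..<s - int ?n}. f p)" .
  have "{N..<s} = {N..<s - int ?n} \<union> {s - int ?n..<s}" using le by auto
  then have "(\<Sum>p\<in>{N..<s}. f p) = (\<Sum>p\<in>{N..<s - int ?n}. f p) + (\<Sum>p\<in>{s - int ?n..<s}. f p)"
    by (simp add: sum.union_disjoint)
  moreover have "(\<Sum>p\<in>{s - int ?n..<s}. f p) = (\<Sum>x\<in>{1..?n}. f (s - int x))"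
  proof -
    have inj: "inj_on (\<lambda>x. s - int x) {1..?n}" by (auto simp: inj_on_def)
    have "(\<lambda>x. s - int x) ` {1..?n} = {s - int ?n..<s}"
    proof (intro equalityI subsetI)
      fix p assume "p \<in> {s - int ?n..<s}"
      then have "p = s - int (nat (s - p))" "nat (s - p) \<in> {1..?n}" by auto
      then show "p \<in> (\<lambda>x. s - int x) ` {1..?n}" by blast
    qed auto
    then show ?thesis using sum.reindex[OF inj, of f] by simp
  qed
  moreover have "(\<Sum>x\<in>{1..?n}. f (bn xs s x) - f (s - int x)) = (\<Sum>x\<in>{1..?n}. f (bn xs s x)) - (\<Sum>x\<in>{1..?n}. f (s - int x))"
    by (rule sum_subtractf)
  ultimately show ?thesis using 1 by linarith
qed

lemma step_div: assumes "(e::int) > 0"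
  shows "(w + 1) div e - w div e = (if (w + 1) mod e = 0 then 1 else 0)"
proof -
  define q where "q = w div e"
  define rr where "rr = w mod e"
  have w: "w = q * e + rr" unfolding q_def rr_def by simp
  have r: "0 \<le> rr" "rr < e" unfolding rr_def using assms by auto
  show ?thesis
  proof (cases "rr + 1 < e")
    case True
    have eq: "(w + 1) = (rr + 1) + q * e" using w by simp
    have "(w+1) div e = q + (rr + 1) div e" unfolding eq using assms by (metis div_mult_self1 less_irrefl)
    moreover have "(rr + 1) div e = 0" using True r by (intro div_pos_pos_trivial) auto
    moreover have "(w+1) mod e = (rr + 1) mod e" unfolding eq by (metis mod_mult_self1)
    moreover have "(rr + 1) mod e = rr + 1" using True r by (intro mod_pos_pos_trivial) auto
    ultimately have "(w+1) div e = q" "(w+1) mod e = rr + 1" by simp_all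
    then show ?thesis using r q_def by simp
  next
    case False
    then have "w + 1 = (q + 1) * e" using w r by (simp add: algebra_simps)
    then show ?thesis using assms q_def by simp
  qed
qed

lemma count_row: assumes "(e::int) > 0" "0 \<le> j" "j < e"
  shows "int (count (mset (map (\<lambda>y. (a + int y) mod e) [1..<m+1])) j) = (a + int m - j) div e - (a - j) div e"
proof (induction m)
  case 0 then show ?case by simp
next
  case (Suc m)
  have st: "(a + int m - j + 1) div e - (a + int m - j) div e = (if (a + int m - j + 1) mod e = 0 then 1 else 0)"
    by (rule step_div[OF assms(1)])
  have "(a + int m - j + 1) mod e = 0 \<longleftrightarrow> (a + int (Suc m)) mod e = j"
  proof -
    have "(a + int m - j + 1) mod e = 0 \<longleftrightarrow> e dvd (a + int (Suc m)) - j" by (simp add: dvd_eq_mod_eq_0 algebra_simps)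
    also have "\<dots> \<longleftrightarrow> (a + int (Suc m)) mod e = j mod e" by (simp add: mod_eq_dvd_iff)
    also have "j mod e = j" using assms by simp
    finally show ?thesis .
  qed
  then show ?case using Suc st by (auto simp: algebra_simps)
qed

definition cnt :: "nat \<Rightarrow> int \<Rightarrow> int \<Rightarrow> int" where
  "cnt e j p = (p - j) div int e"

lemma count_res: assumes "valid_conf c" "e > 0" "0 \<le> j" "j < int e"
  shows "int (count (res_mset e c) j) = (\<Sum>x\<in>{1..length (fst c)}. cnt e j (bn (fst c) (snd c) x) - cnt e j (snd c - int x))"
proof -
  have "int (count (res_mset e c) j) = (\<Sum>x\<in>{1..length (fst c)}.
      int (count (mset (map (\<lambda>y. (snd c + int y - int x) mod int e) [1..<part_nth (fst c) x + 1])) j))"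
    unfolding res_mset_def count_sum by simp
  also have "\<dots> = (\<Sum>x\<in>{1..length (fst c)}. cnt e j (bn (fst c) (snd c) x) - cnt e j (snd c - int x))"
  proof (rule sum.cong[OF refl])
    fix x
    have "(\<lambda>y. (snd c + int y - int x) mod int e) = (\<lambda>y. ((snd c - int x) + int y) mod int e)"
      by (simp add: algebra_simps)
    then show "int (count (mset (map (\<lambda>y. (snd c + int y - int x) mod int e) [1..<part_nth (fst c) x + 1])) j)
      = cnt e j (bn (fst c) (snd c) x) - cnt e j (snd c - int x)"
      using count_row[of "int e" j "snd c - int x" "part_nth (fst c) x"] assms
      unfolding cnt_def bn_def by (simp add: algebra_simps)
  qed
  finally show ?thesis .
qed

lemma set_shift1: "{1..n} = Suc ` {0..<n}"
proof (intro equalityI subsetI)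
  fix x assume "x \<in> {1..n}" then show "x \<in> Suc ` {0..<n}" by (intro image_eqI[of _ _ "x - 1"]) auto
qed auto

lemma size_res: "size (res_mset e c) = part_size (fst c)"
proof -
  have sz: "size (sum f A) = (\<Sum>a\<in>A. size (f a))" for f :: "nat \<Rightarrow> int multiset" and A
    by (induct A rule: infinite_finite_induct) simp_all
  have "size (res_mset e c) = (\<Sum>x\<in>{1..length (fst c)}. part_nth (fst c) x)"
    unfolding res_mset_def sz by (simp del: upt_Suc)
  also have "\<dots> = (\<Sum>i\<in>{0..<length (fst c)}. fst c ! i)"
  proof -
    have "{1..length (fst c)} = Suc ` {0..<length (fst c)}" by (rule set_shift1)
    then show ?thesis by (intro sum.reindex_cong[of Suc]) (auto simp: part_nth_def)
  qed
  also have "\<dots> = part_size (fst c)" unfolding part_size_def by (simp add: sum_list_sum_nth)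
  finally show ?thesis .
qed

lemma size_conf: assumes "valid_conf c"
  shows "int (part_size (fst c)) = (\<Sum>x\<in>{1..length (fst c)}. bn (fst c) (snd c) x - (snd c - int x))"
proof -
  have "int (part_size (fst c)) = int (size (res_mset 1 c))" by (simp add: size_res)
  also have "\<dots> = (\<Sum>x\<in>{1..length (fst c)}. int (part_nth (fst c) x))"
  proof -
    have sz: "size (sum f A) = (\<Sum>a\<in>A. size (f a))" for f :: "nat \<Rightarrow> int multiset" and A
      by (induct A rule: infinite_finite_induct) simp_all
    show ?thesis unfolding res_mset_def sz by (simp del: upt_Suc)
  qed
  finally show ?thesis unfolding bn_def by simp
qed

definition Sj :: "nat \<Rightarrow> int set \<Rightarrow> int \<Rightarrow> int \<Rightarrow> int" where
  "Sj e B n j = (\<Sum>b\<in>B \<inter> {n * int e..}. (b - j) div int e)"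

definition fib :: "nat \<Rightarrow> int set \<Rightarrow> int \<Rightarrow> nat \<Rightarrow> int set" where
  "fib e B n i = {b \<in> B \<inter> {n * int e..}. b mod int e = int i}"

lemma runner_cut: assumes "e > 0" "i < e" "\<forall>x < n * int e. x \<in> B" shows "\<forall>x < n. x \<in> runner e i B"
proof (intro allI impI)
  fix x assume "x < n"
  then have "x + 1 \<le> n" by simp
  then have "(x + 1) * int e \<le> n * int e" using assms(1) by (simp add: mult_right_mono)
  then have "x * int e + int i < n * int e" using assms(2) by (simp add: algebra_simps)
  then show "x \<in> runner e i B" using assms(3) unfolding runner_def by simp
qed

lemma fib_img: assumes "e > 0" "i < e"
  shows "(\<lambda>b. b div int e) ` fib e B n i = runner e i B \<inter> {n..}" "inj_on (\<lambda>b. b div int e) (fib e B n i)"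
proof -
  have dm: "b = (b div int e) * int e + int i" if "b mod int e = int i" for b
    using that by (metis div_mult_mod_eq)
  show "(\<lambda>b. b div int e) ` fib e B n i = runner e i B \<inter> {n..}"
  proof (intro equalityI subsetI)
    fix c assume "c \<in> (\<lambda>b. b div int e) ` fib e B n i"
    then obtain b where b: "b \<in> B" "b \<ge> n * int e" "b mod int e = int i" "c = b div int e"
      unfolding fib_def by auto
    have "c \<ge> n"
    proof (rule ccontr)
      assume "\<not> c \<ge> n"
      then have "(c + 1) * int e \<le> n * int e" using assms(1) by (simp add: mult_right_mono)
      then have "b < n * int e" using dm[OF b(3)] b(4) assms(2) by (simp add: algebra_simps)
      then show False using b(2) by simp
    qed
    then show "c \<in> runner e i B \<inter> {n..}" using b dm[OF b(3)] unfolding runner_def by auto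
  next
    fix c assume c: "c \<in> runner e i B \<inter> {n..}"
    define b where "b = c * int e + int i"
    have "b mod int e = int i" "b div int e = c" using assms unfolding b_def by auto
    moreover have "b \<ge> n * int e" using c assms(1) unfolding b_def by (simp add: mult_right_mono add_increasing2)
    moreover have "b \<in> B" using c unfolding runner_def b_def by simp
    ultimately show "c \<in> (\<lambda>b. b div int e) ` fib e B n i" unfolding fib_def by (metis (mono_tags, lifting) IntI atLeast_iff image_eqI mem_Collect_eq)
  qed
  show "inj_on (\<lambda>b. b div int e) (fib e B n i)"
  proof (rule inj_onI)
    fix x y assume "x \<in> fib e B n i" "y \<in> fib e B n i" "x div int e = y div int e"
    then show "x = y" using dm[of x] dm[of y] unfolding fib_def by auto
  qed
qed

lemma cut_conf: fixes f :: "int \<Rightarrow> int" assumes "valid_conf r" "\<forall>x<N. x \<in> conf_beta r"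
  shows "int (card (conf_beta r \<inter> {N..})) = snd r - N"
    "(\<Sum>b\<in>conf_beta r \<inter> {N..}. f b) - (\<Sum>p\<in>{N..<snd r}. f p)
       = (\<Sum>x\<in>{1..length (fst r)}. f (bn (fst r) (snd r) x) - f (snd r - int x))"
    "finite (conf_beta r \<inter> {N..})"
  using cut_card[of "fst r" N "snd r"] cut_sum[of "fst r" N "snd r" f] cut_fin[of "fst r" N "snd r"] assms
  by (auto simp: valid_conf_def conf_beta_def)

locale cutctx =
  fixes e :: nat and c :: config and n :: int
  assumes e: "e > 0" and v: "valid_conf c" and cut: "\<forall>x < n * int e. x \<in> conf_beta c"
begin

abbreviation "B \<equiv> conf_beta c"

lemma eta_i: assumes "i < e"
  shows "valid_conf (eta e c ! i)" "conf_beta (eta e c ! i) = runner e i B"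
    "\<forall>x<n. x \<in> conf_beta (eta e c ! i)"
proof -
  have bb: "betaset (runner e i B)" by (rule runner_betaset[OF conf_betaset[OF v] e assms])
  show "valid_conf (eta e c ! i)" "conf_beta (eta e c ! i) = runner e i B"
    using of_beta_props[OF bb] eta_nth[OF e assms] by auto
  then show "\<forall>x<n. x \<in> conf_beta (eta e c ! i)" using runner_cut[OF e assms cut] by simp
qed

lemma fin: "finite (B \<inter> {n * int e..})"
  using cut_conf(3)[OF v cut] .

lemma fib_card: assumes "i < e" shows "int (card (fib e B n i)) = snd (eta e c ! i) - n"
proof -
  have "card (fib e B n i) = card (runner e i B \<inter> {n..})"
    using card_image[OF fib_img(2)[OF e assms]] fib_img(1)[OF e assms] by metis
  then show ?thesis using cut_conf(1)[OF eta_i(1,3)[OF assms]] eta_i(2)[OF assms] by simp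
qed

lemma fib_sum: assumes "i < e"
  shows "(\<Sum>b\<in>fib e B n i. b div int e) = int (part_size (fst (eta e c ! i))) + (\<Sum>p\<in>{n..<snd (eta e c ! i)}. p)"
proof -
  let ?r = "eta e c ! i"
  have "(\<Sum>b\<in>fib e B n i. b div int e) = (\<Sum>x\<in>runner e i B \<inter> {n..}. x)"
    using sum.reindex[OF fib_img(2)[OF e assms], of "\<lambda>x. x"] fib_img(1)[OF e assms] by simp
  also have "\<dots> = (\<Sum>x\<in>{1..length (fst ?r)}. bn (fst ?r) (snd ?r) x - (snd ?r - int x)) + (\<Sum>p\<in>{n..<snd ?r}. p)"
    using cut_conf(2)[OF eta_i(1,3)[OF assms], of "\<lambda>x. x"] eta_i(2)[OF assms] by simp
  finally show ?thesis using size_conf[OF eta_i(1)[OF assms]] by simp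
qed

lemma union_fib: "B \<inter> {n * int e..} = (\<Union>i\<in>{..<e}. fib e B n i)"
proof -
  have "nat (b mod int e) < e" for b using e by (simp add: nat_less_iff)
  moreover have "int (nat (b mod int e)) = b mod int e" for b using e by simp
  ultimately show ?thesis unfolding fib_def
  proof (intro equalityI subsetI)
    fix x assume "x \<in> B \<inter> {n * int e..}"
    then have "x \<in> {b \<in> B \<inter> {n * int e..}. b mod int e = int (nat (x mod int e))}" "nat (x mod int e) \<in> {..<e}"
      using e by (auto simp: nat_less_iff)
    then show "x \<in> (\<Union>i\<in>{..<e}. {b \<in> B \<inter> {n * int e..}. b mod int e = int i})" by blast
  qed auto
qed

lemma disj_fib: "\<forall>i\<in>{..<e}. \<forall>j\<in>{..<e}. i \<noteq> j \<longrightarrow> fib e B n i \<inter> fib e B n j = {}"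
  unfolding fib_def by auto

lemma fin_fib: "finite (fib e B n i)"
  using fin unfolding fib_def by (rule rev_finite_subset) auto

lemma sum_fib: "(\<Sum>b\<in>B \<inter> {n * int e..}. g b) = (\<Sum>i<e. \<Sum>b\<in>fib e B n i. g b)"
  unfolding union_fib by (rule sum.UNION_disjoint) (use fin_fib disj_fib in auto)

lemma F1: assumes "0 \<le> j" "j < int e"
  shows "int (count (res_mset e c) j) = Sj e B n j - (\<Sum>p\<in>{n * int e..<snd c}. cnt e j p)"
  using count_res[OF v e assms] cut_conf(2)[OF v cut, of "cnt e j"] unfolding Sj_def cnt_def by simp

lemma F2: assumes "i < e" shows "Sj e B n (int i) - Sj e B n (int i + 1) = snd (eta e c ! i) - n"
proof -
  have "Sj e B n (int i) - Sj e B n (int i + 1) = (\<Sum>b\<in>B \<inter> {n * int e..}. (b - int i) div int e - (b - int i - 1) div int e)"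
    unfolding Sj_def by (simp add: sum_subtractf algebra_simps)
  also have "\<dots> = (\<Sum>b\<in>B \<inter> {n * int e..}. if b mod int e = int i then 1 else 0)"
  proof (rule sum.cong[OF refl])
    fix b
    have "(b - int i - 1 + 1) div int e - (b - int i - 1) div int e = (if (b - int i - 1 + 1) mod int e = 0 then 1 else 0)"
      by (rule step_div) (use e in simp)
    moreover have "(b - int i) mod int e = 0 \<longleftrightarrow> b mod int e = int i"
    proof -
      have "(b - int i) mod int e = 0 \<longleftrightarrow> b mod int e = int i mod int e" by (simp add: mod_eq_dvd_iff dvd_eq_mod_eq_0)
      then show ?thesis using assms by simp
    qed
    ultimately show "(b - int i) div int e - (b - int i - 1) div int e = (if b mod int e = int i then 1 else 0)" by simp
  qed
  also have "\<dots> = int (card (fib e B n i))"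
    unfolding fib_def using sum.inter_filter[OF fin, of "\<lambda>_. 1::int" "\<lambda>b. b mod int e = int i"] by simp
  finally show ?thesis using fib_card[OF assms] by simp
qed

lemma F3: "snd c = n * int e + (\<Sum>i<e. snd (eta e c ! i) - n)"
proof -
  have "int (card (B \<inter> {n * int e..})) = (\<Sum>i<e. int (card (fib e B n i)))"
    using sum_fib[of "\<lambda>_. 1::int"] by simp
  then show ?thesis using cut_conf(1)[OF v cut] fib_card by simp
qed

lemma F4: "Sj e B n 0 = (\<Sum>i<e. int (part_size (fst (eta e c ! i))) + (\<Sum>p\<in>{n..<snd (eta e c ! i)}. p))"
  unfolding Sj_def using sum_fib[of "\<lambda>b. b div int e"] fib_sum by simp

end

lemma wt_sum: "int (wt e c) = (\<Sum>i<e. int (part_size (fst (eta e c ! i))))"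
proof -
  have "wt e c = (\<Sum>i<e. part_size (fst (eta e c ! i)))"
    unfolding wt_def sum_list_sum_nth by (simp add: eta_len atLeast0LessThan)
  then show ?thesis by simp
qed

lemma cutctx_mono: "cutctx e c n \<Longrightarrow> n' \<le> n \<Longrightarrow> cutctx e c n'"
proof -
  assume a: "cutctx e c n" "n' \<le> n"
  then have "n' * int e \<le> n * int e" by (intro mult_right_mono) auto
  moreover have "\<forall>x<n * int e. x \<in> conf_beta c" using a(1) by (simp add: cutctx_def)
  ultimately have "\<forall>x<n' * int e. x \<in> conf_beta c" by (meson less_le_trans)
  then show ?thesis using a(1) unfolding cutctx_def by auto
qed

lemma cut_list: assumes "e > 0" "\<forall>c\<in>set cs. valid_conf c" shows "\<exists>n. \<forall>c\<in>set cs. cutctx e c n"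
  using assms(2)
proof (induction cs)
  case Nil then show ?case by simp
next
  case (Cons c cs)
  then obtain n where n: "\<forall>d\<in>set cs. cutctx e d n" by auto
  have vc: "valid_conf c" using Cons by simp
  obtain L where L: "\<forall>x<L. x \<in> conf_beta c" using conf_betaset[OF vc] unfolding betaset_def by auto
  define m where "m = min n (- \<bar>L\<bar>)"
  have "m * int e \<le> m * 1" using assms(1) unfolding m_def by (intro mult_left_mono_neg) auto
  then have "m * int e \<le> L" unfolding m_def by auto
  then have "cutctx e c m" using L vc assms(1) unfolding cutctx_def by auto
  moreover have "\<forall>d\<in>set cs. cutctx e d m" using n cutctx_mono m_def by auto
  ultimately show ?case by auto
qed

lemma res_range: assumes "e > 0" "x < 0 \<or> x \<ge> int e" shows "count (res_mset e c) x = 0"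
proof -
  have "x \<notin> set (map (\<lambda>y. (snd c + int y - int a) mod int e) l)" for a l
  proof
    assume "x \<in> set (map (\<lambda>y. (snd c + int y - int a) mod int e) l)"
    then obtain y where "x = (snd c + int y - int a) mod int e" by auto
    moreover have "0 \<le> (snd c + int y - int a) mod int e" "(snd c + int y - int a) mod int e < int e"
      using assms(1) by auto
    ultimately show False using assms(2) by auto
  qed
  then have z: "count (mset (map (\<lambda>y. (snd c + int y - int a) mod int e) l)) x = 0" for a l
    by (metis count_mset_0_iff)
  show ?thesis unfolding res_mset_def count_sum by (intro sum.neutral ballI z)
qed

lemma res_eqI: assumes "e > 0" "\<And>j. 0 \<le> j \<Longrightarrow> j < int e \<Longrightarrow> count (res_mset e c) j = count (res_mset e d) j"
  shows "res_mset e c = res_mset e d"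
proof (rule multiset_eqI)
  fix x show "count (res_mset e c) x = count (res_mset e d) x"
  proof (cases "0 \<le> x \<and> x < int e")
    case True then show ?thesis using assms(2) by auto
  next
    case False then show ?thesis using res_range[OF assms(1), of x c] res_range[OF assms(1), of x d] by auto
  qed
qed

lemma sum_split_last: fixes e :: nat assumes "e > 0" shows "(\<Sum>i<e. f i) = (\<Sum>i<e-1. f i) + (f (e - 1) :: int)"
proof -
  have "e = Suc (e - 1)" using assms by simp
  then show ?thesis by (metis sum.lessThan_Suc add.commute)
qed

lemma E1: assumes e: "e > 0" and v: "valid_conf c" "valid_conf d" and s: "snd c = snd d"
  and r: "res_mset e c = res_mset e d"
  shows "\<forall>i<e. snd (eta e c ! i) = snd (eta e d ! i)" "wt e c = wt e d"
proof -
  obtain n where "\<forall>x\<in>set [c, d]. cutctx e x n" using cut_list[OF e, of "[c,d]"] v by auto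
  then have cc: "cutctx e c n" and cd: "cutctx e d n" by auto
  have Sj: "Sj e (conf_beta c) n j = Sj e (conf_beta d) n j" if "0 \<le> j" "j < int e" for j
    using cutctx.F1[OF cc that] cutctx.F1[OF cd that] r s by simp
  have t1: "snd (eta e c ! i) = snd (eta e d ! i)" if "i < e - 1" for i
    using cutctx.F2[OF cc, of i] cutctx.F2[OF cd, of i] Sj[of "int i"] Sj[of "int i + 1"] that by simp
  have "(\<Sum>i<e. snd (eta e c ! i) - n) = (\<Sum>i<e. snd (eta e d ! i) - n)"
    using cutctx.F3[OF cc] cutctx.F3[OF cd] s by simp
  then have "(\<Sum>i<e-1. snd (eta e c ! i) - n) + (snd (eta e c ! (e-1)) - n)
      = (\<Sum>i<e-1. snd (eta e d ! i) - n) + (snd (eta e d ! (e-1)) - n)"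
    using sum_split_last[OF e] by metis
  moreover have "(\<Sum>i<e-1. snd (eta e c ! i) - n) = (\<Sum>i<e-1. snd (eta e d ! i) - n)"
    using t1 by (intro sum.cong) auto
  ultimately have "snd (eta e c ! (e-1)) = snd (eta e d ! (e-1))" by simp
  then show t: "\<forall>i<e. snd (eta e c ! i) = snd (eta e d ! i)"
  proof (intro allI impI)
    fix i assume "i < e" "snd (eta e c ! (e - 1)) = snd (eta e d ! (e - 1))"
    show "snd (eta e c ! i) = snd (eta e d ! i)"
    proof (cases "i < e - 1")
      case True then show ?thesis using t1 by auto
    next
      case False then have "i = e - 1" using \<open>i < e\<close> by linarith
      then show ?thesis using \<open>snd (eta e c ! (e - 1)) = _\<close> by simp
    qed
  qed
  have "(\<Sum>i<e. int (part_size (fst (eta e c ! i))) + (\<Sum>p\<in>{n..<snd (eta e c ! i)}. p))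
      = (\<Sum>i<e. int (part_size (fst (eta e d ! i))) + (\<Sum>p\<in>{n..<snd (eta e d ! i)}. p))"
    using cutctx.F4[OF cc] cutctx.F4[OF cd] Sj[of 0] e by simp
  moreover have "(\<Sum>i<e. (\<Sum>p\<in>{n..<snd (eta e c ! i)}. p)) = (\<Sum>i<e. (\<Sum>p\<in>{n..<snd (eta e d ! i)}. p))"
    using t by (intro sum.cong) auto
  ultimately have "(\<Sum>i<e. int (part_size (fst (eta e c ! i)))) = (\<Sum>i<e. int (part_size (fst (eta e d ! i))))"
    by (simp add: sum.distrib)
  then show "wt e c = wt e d" using wt_sum[of e c] wt_sum[of e d] by simp
qed

lemma E2: assumes e: "e > 0" and v: "valid_conf c" "valid_conf d"
  and t: "\<forall>i<e. snd (eta e c ! i) = snd (eta e d ! i)" and w: "wt e c = wt e d"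
  shows "snd c = snd d" "res_mset e c = res_mset e d"
proof -
  obtain n where "\<forall>x\<in>set [c, d]. cutctx e x n" using cut_list[OF e, of "[c,d]"] v by auto
  then have cc: "cutctx e c n" and cd: "cutctx e d n" by auto
  have "(\<Sum>i<e. snd (eta e c ! i) - n) = (\<Sum>i<e. snd (eta e d ! i) - n)"
    using t by (intro sum.cong) auto
  then show s: "snd c = snd d" using cutctx.F3[OF cc] cutctx.F3[OF cd] by simp
  have "(\<Sum>i<e. (\<Sum>p\<in>{n..<snd (eta e c ! i)}. p)) = (\<Sum>i<e. (\<Sum>p\<in>{n..<snd (eta e d ! i)}. p))"
    using t by (intro sum.cong) auto
  moreover have "(\<Sum>i<e. int (part_size (fst (eta e c ! i)))) = (\<Sum>i<e. int (part_size (fst (eta e d ! i))))"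
    using w wt_sum[of e c] wt_sum[of e d] by simp
  ultimately have S0: "Sj e (conf_beta c) n 0 = Sj e (conf_beta d) n 0"
    using cutctx.F4[OF cc] cutctx.F4[OF cd] by (simp add: sum.distrib)
  have Sj: "Sj e (conf_beta c) n (int j) = Sj e (conf_beta d) n (int j)" if "j \<le> e" for j
    using that
  proof (induction j)
    case 0 then show ?case using S0 by simp
  next
    case (Suc j)
    then have "j < e" by simp
    have "int (Suc j) = int j + 1" by simp
    have a: "Sj e (conf_beta c) n (int j) - Sj e (conf_beta c) n (int j + 1) = snd (eta e c ! j) - n"
      by (rule cutctx.F2[OF cc \<open>j < e\<close>])
    have b: "Sj e (conf_beta d) n (int j) - Sj e (conf_beta d) n (int j + 1) = snd (eta e d ! j) - n"
      by (rule cutctx.F2[OF cd \<open>j < e\<close>])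
    have "Sj e (conf_beta c) n (int j) = Sj e (conf_beta d) n (int j)" using Suc by simp
    then have "Sj e (conf_beta c) n (int j + 1) = Sj e (conf_beta d) n (int j + 1)"
      using a b t \<open>j < e\<close> by auto
    then show ?case using \<open>int (Suc j) = int j + 1\<close> by (simp add: add.commute)
  qed
  show "res_mset e c = res_mset e d"
  proof (rule res_eqI[OF e])
    fix j :: int assume j: "0 \<le> j" "j < int e"
    then have "Sj e (conf_beta c) n j = Sj e (conf_beta d) n j" using Sj[of "nat j"] by simp
    then have "int (count (res_mset e c) j) = int (count (res_mset e d) j)"
      using cutctx.F1[OF cc j] cutctx.F1[OF cd j] s by simp
    then show "count (res_mset e c) j = count (res_mset e d) j" by simp
  qed
qed

lemma psi_mod: "e > 0 \<Longrightarrow> psi e r k x mod int e = x mod int e"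
  unfolding psi_def by simp

lemma psi_div: "e > 0 \<Longrightarrow> psi e r k x div int e = (x div int e + 1) * int r - int k"
  unfolding psi_def by simp

lemma qe_ge: assumes "(e::int) > 0" "0 \<le> i" "i < e" shows "N * e \<le> q * e + i \<longleftrightarrow> N \<le> q"
proof
  assume "N * e \<le> q * e + i"
  show "N \<le> q"
  proof (rule ccontr)
    assume "\<not> N \<le> q"
    then have "(q + 1) * e \<le> N * e" using assms by (intro mult_right_mono) auto
    then show False using \<open>N * e \<le> q * e + i\<close> assms by (simp add: algebra_simps)
  qed
next
  assume "N \<le> q"
  then have "N * e \<le> q * e" using assms by (intro mult_right_mono) auto
  then show "N * e \<le> q * e + i" using assms by linarith
qed

lemma ge_cut: assumes "(e::int) > 0" shows "N * e \<le> x \<longleftrightarrow> N \<le> x div e"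
proof -
  have "x = (x div e) * e + x mod e" by simp
  then show ?thesis using qe_ge[OF assms, of "x mod e" N "x div e"] assms by simp
qed

lemma mr_ge: assumes "1 \<le> k" "k \<le> (r::int)" shows "n * r \<le> m * r - k \<longleftrightarrow> n + 1 \<le> m"
proof
  assume a: "n * r \<le> m * r - k"
  show "n + 1 \<le> m"
  proof (rule ccontr)
    assume "\<not> n + 1 \<le> m"
    then have "m * r \<le> n * r" using assms by (intro mult_right_mono) auto
    then show False using a assms by linarith
  qed
next
  assume "n + 1 \<le> m"
  then have "(n+1) * r \<le> m * r" using assms by (intro mult_right_mono) auto
  then show "n * r \<le> m * r - k" using assms by (simp add: algebra_simps)
qed

lemma psi_ge: assumes "e > 0" "1 \<le> k" "k \<le> r"
  shows "n * int r * int e \<le> psi e r k x \<longleftrightarrow> n * int e \<le> x"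
proof -
  have "n * int r * int e \<le> psi e r k x \<longleftrightarrow> n * int r \<le> psi e r k x div int e"
    using ge_cut[of "int e" "n * int r"] assms by simp
  also have "\<dots> \<longleftrightarrow> n * int r \<le> (x div int e + 1) * int r - int k" using psi_div assms by simp
  also have "\<dots> \<longleftrightarrow> n + 1 \<le> x div int e + 1" using mr_ge[of "int k" "int r" n] assms by simp
  also have "\<dots> \<longleftrightarrow> n * int e \<le> x" using ge_cut[of "int e" n x] assms by simp
  finally show ?thesis .
qed

lemma psi_surj: assumes "e > 0" "r > 0"
  shows "\<exists>k x. 1 \<le> k \<and> k \<le> r \<and> p = psi e r k x"
proof -
  define q where "q = p div int e"
  define k where "k = r - nat (q mod int r)"
  define x where "x = (q div int r) * int e + p mod int e"
  have qm: "0 \<le> q mod int r" "q mod int r < int r" using assms by auto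
  have k1: "1 \<le> k" "k \<le> r" unfolding k_def using qm by auto
  have kk: "int k = int r - q mod int r" unfolding k_def using qm by auto
  have xd: "x div int e = q div int r" "x mod int e = p mod int e" unfolding x_def using assms by auto
  have "psi e r k x = ((q div int r + 1) * int r - int k) * int e + p mod int e"
    unfolding psi_def xd by simp
  also have "(q div int r + 1) * int r - int k = q" unfolding kk
    by (simp add: algebra_simps)
  finally have "psi e r k x = p" unfolding q_def by simp
  then show ?thesis using k1 by auto
qed

lemma psi_inj: assumes "e > 0" "1 \<le> k" "k \<le> r" "1 \<le> k'" "k' \<le> r" "psi e r k x = psi e r k' x'"
  shows "k = k' \<and> x = x'"
proof -
  have m: "x mod int e = x' mod int e" using psi_mod[OF assms(1), of r k x] psi_mod[OF assms(1), of r k' x'] assms(6) by simp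
  have d: "(x div int e + 1) * int r - int k = (x' div int e + 1) * int r - int k'"
    using psi_div[OF assms(1), of r k x] psi_div[OF assms(1), of r k' x'] assms(6) by simp
  have "(x div int e + 1) * int r - int k = (int r - int k) + (x div int e) * int r" by (simp add: algebra_simps)
  then have "((x div int e + 1) * int r - int k) mod int r = (int r - int k) mod int r"
    by (simp only: mod_mult_self1)
  moreover have "(x' div int e + 1) * int r - int k' = (int r - int k') + (x' div int e) * int r" by (simp add: algebra_simps)
  then have "((x' div int e + 1) * int r - int k') mod int r = (int r - int k') mod int r"
    by (simp only: mod_mult_self1)
  moreover have "(int r - int k) mod int r = int r - int k" "(int r - int k') mod int r = int r - int k'"
    using assms by (intro mod_pos_pos_trivial; simp)+
  ultimately have kk: "k = k'" using d by simp
  then have "x div int e = x' div int e" using d assms by simp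
  have "x = x div int e * int e + x mod int e" by simp
  also have "\<dots> = x' div int e * int e + x' mod int e" using \<open>x div int e = x' div int e\<close> m by simp
  also have "\<dots> = x'" by simp
  finally have "x = x'" .
  then show ?thesis using kk by simp
qed

definition PB :: "nat \<Rightarrow> nat \<Rightarrow> config list \<Rightarrow> int set" where
  "PB e r y = (\<Union>k\<in>{1..r}. psi e r k ` conf_beta (y ! (k - 1)))"

lemma PB_cut: assumes "e > 0" "r > 0" "\<forall>k\<in>{1..r}. \<forall>x < n * int e. x \<in> conf_beta (y ! (k-1))"
  shows "\<forall>p < n * int r * int e. p \<in> PB e r y"
proof (intro allI impI)
  fix p assume p: "p < n * int r * int e"
  obtain k x where kx: "1 \<le> k" "k \<le> r" "p = psi e r k x" using psi_surj[OF assms(1,2)] by blast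
  have "\<not> n * int r * int e \<le> psi e r k x" using p kx(3) by simp
  then have "\<not> n * int e \<le> x" using psi_ge[OF assms(1) kx(1,2), of n x] by simp
  then have "x < n * int e" by simp
  moreover have "k \<in> {1..r}" using kx by simp
  ultimately have "x \<in> conf_beta (y ! (k-1))" using assms(3) by blast
  then have "psi e r k x \<in> psi e r k ` conf_beta (y ! (k - 1))" by (rule imageI)
  then show "p \<in> PB e r y" using kx \<open>k \<in> {1..r}\<close> unfolding PB_def by (intro UN_I[of k]) auto
qed

lemma PB_betaset: assumes "e > 0" "r > 0" "valid_multi r y" shows "betaset (PB e r y)"
proof -
  have vy: "\<forall>c\<in>set y. valid_conf c" and ly: "length y = r" using assms(3) unfolding valid_multi_def by auto
  obtain n where n: "\<forall>c\<in>set y. cutctx e c n" using cut_list[OF assms(1) vy] by auto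
  have comp: "y ! (k-1) \<in> set y" if "k \<in> {1..r}" for k using that ly by auto
  have "\<forall>k\<in>{1..r}. \<forall>x < n * int e. x \<in> conf_beta (y ! (k-1))"
  proof (intro ballI allI impI)
    fix k x assume "k \<in> {1..r}" "x < n * int e"
    moreover have "cutctx e (y ! (k-1)) n" using n comp[OF \<open>k \<in> {1..r}\<close>] by simp
    ultimately show "x \<in> conf_beta (y ! (k-1))" unfolding cutctx_def by simp
  qed
  then have low: "\<forall>p < n * int r * int e. p \<in> PB e r y" by (rule PB_cut[OF assms(1,2)])
  have "\<forall>k\<in>{1..r}. \<exists>U. \<forall>x\<in>conf_beta (y ! (k-1)). x < U"
  proof
    fix k assume "k \<in> {1..r}"
    then have "valid_conf (y ! (k-1))" using vy comp by simp
    then have "betaset (conf_beta (y ! (k-1)))" by (rule conf_betaset)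
    then show "\<exists>U. \<forall>x\<in>conf_beta (y ! (k-1)). x < U" unfolding betaset_def by simp
  qed
  then have "\<exists>U. \<forall>k\<in>{1..r}. \<forall>x\<in>conf_beta (y ! (k-1)). x < U k" by (rule bchoice)
  then obtain U where U: "\<forall>k\<in>{1..r}. \<forall>x\<in>conf_beta (y ! (k-1)). x < U k" by blast
  define N where "N = (\<Sum>k\<in>{1..r}. \<bar>U k\<bar>) + 1"
  have UN: "U k < N" if "k \<in> {1..r}" for k
  proof -
    have "\<bar>U k\<bar> \<le> (\<Sum>k\<in>{1..r}. \<bar>U k\<bar>)" using that by (intro member_le_sum) auto
    then show ?thesis unfolding N_def by auto
  qed
  have Npos: "N \<ge> 1" unfolding N_def by (simp add: sum_nonneg)
  have "\<forall>p\<in>PB e r y. p < N * int r * int e"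
  proof
    fix p assume "p \<in> PB e r y"
    then obtain k x where kx: "k \<in> {1..r}" "x \<in> conf_beta (y ! (k-1))" "p = psi e r k x" unfolding PB_def by auto
    have "x < U k" using U kx by auto
    also have "\<dots> < N" using UN kx by auto
    also have "N \<le> N * int e" using Npos assms(1) by (simp add: mult_le_cancel_left1)
    finally have "\<not> N * int e \<le> x" by simp
    then show "p < N * int r * int e" using psi_ge[OF assms(1), of k r N x] kx by auto
  qed
  then show ?thesis using low unfolding betaset_def by blast
qed

lemma Psi_conf: assumes "e > 0" "r > 0" "valid_multi r y"
  shows "valid_conf (Psi e r y)" "conf_beta (Psi e r y) = PB e r y"
  using of_beta_props[OF PB_betaset[OF assms]] unfolding Psi_def PB_def by auto

lemma phi_psi: assumes "e > 0"
  shows "(psi e r k b - j) div int e = (b - j) div int e + (int r - 1) * (b div int e) + (int r - int k)"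
proof -
  have 1: "psi e r k b - j = (b mod int e - j) + ((b div int e + 1) * int r - int k) * int e"
    unfolding psi_def by (simp add: algebra_simps)
  have 2: "b - j = (b mod int e - j) + (b div int e) * int e"
    by (metis add.commute add_diff_eq div_mult_mod_eq)
  have ne: "int e \<noteq> 0" using assms by simp
  have "(psi e r k b - j) div int e = ((b div int e + 1) * int r - int k) + (b mod int e - j) div int e"
    unfolding 1 by (rule div_mult_self1[OF ne])
  moreover have "(b - j) div int e = b div int e + (b mod int e - j) div int e"
    by (subst 2) (rule div_mult_self1[OF ne])
  ultimately show ?thesis by (simp add: algebra_simps)
qed

lemma sum_list_nth1: "sum_list (map f y) = (\<Sum>k\<in>{1..length y}. f (y ! (k - 1)))"
proof -
  have "sum_list (map f y) = (\<Sum>i\<in>{0..<length y}. f (y ! i))" by (simp add: sum_list_sum_nth)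
  moreover have "(\<Sum>k\<in>{1..length y}. f (y ! (k - 1))) = (\<Sum>i\<in>{0..<length y}. f (y ! i))"
    by (rule sum.reindex_cong[of Suc]) (auto simp: set_shift1)
  ultimately show ?thesis by simp
qed

locale psictx =
  fixes e r :: nat and y :: "config list" and n :: int
  assumes e: "e > 0" and r: "r > 0" and vy: "valid_multi r y"
    and cut: "\<forall>k\<in>{1..r}. cutctx e (y ! (k - 1)) n"
begin

abbreviation "Bk k \<equiv> conf_beta (y ! (k - 1))"

lemma PB_cut': "\<forall>p < n * int r * int e. p \<in> PB e r y"
  by (rule PB_cut[OF e r]) (use cut in \<open>auto simp: cutctx_def\<close>)

lemma cP: "cutctx e (Psi e r y) (n * int r)"
  unfolding cutctx_def using e Psi_conf[OF e r vy] PB_cut' by auto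

lemma ck: "k \<in> {1..r} \<Longrightarrow> cutctx e (y ! (k - 1)) n"
  using cut by blast

lemma fin_k: "k \<in> {1..r} \<Longrightarrow> finite (Bk k \<inter> {n * int e..})"
  by (rule cutctx.fin[OF ck])

lemma PB_upper: "PB e r y \<inter> {n * int r * int e..} = (\<Union>k\<in>{1..r}. psi e r k ` (Bk k \<inter> {n * int e..}))"
proof (intro equalityI subsetI)
  fix p assume "p \<in> PB e r y \<inter> {n * int r * int e..}"
  then obtain k x where kx: "k \<in> {1..r}" "x \<in> Bk k" "p = psi e r k x" "n * int r * int e \<le> p"
    unfolding PB_def by auto
  then have "n * int e \<le> x" using psi_ge[OF e, of k r n x] by auto
  then show "p \<in> (\<Union>k\<in>{1..r}. psi e r k ` (Bk k \<inter> {n * int e..}))" using kx by auto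
next
  fix p assume "p \<in> (\<Union>k\<in>{1..r}. psi e r k ` (Bk k \<inter> {n * int e..}))"
  then obtain k x where kx: "k \<in> {1..r}" "x \<in> Bk k" "p = psi e r k x" "n * int e \<le> x" by auto
  then have "n * int r * int e \<le> p" using psi_ge[OF e, of k r n x] by auto
  then show "p \<in> PB e r y \<inter> {n * int r * int e..}" using kx unfolding PB_def by auto
qed

lemma PB_sum: "(\<Sum>p\<in>PB e r y \<inter> {n * int r * int e..}. g p) = (\<Sum>k\<in>{1..r}. \<Sum>b\<in>Bk k \<inter> {n * int e..}. g (psi e r k b))"
proof -
  have "(\<Sum>p\<in>PB e r y \<inter> {n * int r * int e..}. g p) = (\<Sum>k\<in>{1..r}. \<Sum>p\<in>psi e r k ` (Bk k \<inter> {n * int e..}). g p)"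
    unfolding PB_upper
  proof (rule sum.UNION_disjoint)
    show "finite {1..r}" by simp
    show "\<forall>k\<in>{1..r}. finite (psi e r k ` (Bk k \<inter> {n * int e..}))" using fin_k by auto
    show "\<forall>k\<in>{1..r}. \<forall>k'\<in>{1..r}. k \<noteq> k' \<longrightarrow> psi e r k ` (Bk k \<inter> {n * int e..}) \<inter> psi e r k' ` (Bk k' \<inter> {n * int e..}) = {}"
    proof (intro ballI impI)
      fix k k' assume k: "k \<in> {1..r}" and k': "k' \<in> {1..r}" and ne: "k \<noteq> k'"
      show "psi e r k ` (Bk k \<inter> {n * int e..}) \<inter> psi e r k' ` (Bk k' \<inter> {n * int e..}) = {}"
      proof (rule equals0I)
        fix p assume "p \<in> psi e r k ` (Bk k \<inter> {n * int e..}) \<inter> psi e r k' ` (Bk k' \<inter> {n * int e..})"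
        then obtain x x' where "p = psi e r k x" "p = psi e r k' x'" by blast
        then have "k = k'" using psi_inj[OF e, of k r k' x x'] k k' by auto
        with ne show False by simp
      qed
    qed
  qed
  also have "\<dots> = (\<Sum>k\<in>{1..r}. \<Sum>b\<in>Bk k \<inter> {n * int e..}. g (psi e r k b))"
  proof (rule sum.cong[OF refl])
    fix k assume k: "k \<in> {1..r}"
    have "inj_on (psi e r k) (Bk k \<inter> {n * int e..})"
      using psi_inj[OF e, of k r k] k by (auto simp: inj_on_def)
    then show "(\<Sum>p\<in>psi e r k ` (Bk k \<inter> {n * int e..}). g p) = (\<Sum>b\<in>Bk k \<inter> {n * int e..}. g (psi e r k b))"
      by (rule sum.reindex_cong) auto
  qed
  finally show ?thesis .
qed

lemma card_k: "k \<in> {1..r} \<Longrightarrow> int (card (Bk k \<inter> {n * int e..})) = snd (y ! (k-1)) - n * int e"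
  using cut_conf(1)[OF cutctx.v[OF ck] cutctx.cut[OF ck]] by simp

lemma charge: "snd (Psi e r y) = n * int r * int e + (\<Sum>k\<in>{1..r}. snd (y ! (k-1)) - n * int e)"
proof -
  have "int (card (PB e r y \<inter> {n * int r * int e..})) = (\<Sum>k\<in>{1..r}. int (card (Bk k \<inter> {n * int e..})))"
    using PB_sum[of "\<lambda>_. 1::int"] by simp
  also have "\<dots> = (\<Sum>k\<in>{1..r}. snd (y ! (k-1)) - n * int e)" using card_k by (intro sum.cong) auto
  finally show ?thesis using cut_conf(1)[OF cutctx.v[OF cP] cutctx.cut[OF cP]] Psi_conf(2)[OF e r vy] by simp
qed

lemma Sj_PB: "Sj e (PB e r y) (n * int r) j = (\<Sum>k\<in>{1..r}. Sj e (Bk k) n j + (int r - 1) * Sj e (Bk k) n 0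
   + (int r - int k) * (snd (y ! (k-1)) - n * int e))"
proof -
  have "Sj e (PB e r y) (n * int r) j = (\<Sum>k\<in>{1..r}. \<Sum>b\<in>Bk k \<inter> {n * int e..}.
       (b - j) div int e + (int r - 1) * (b div int e) + (int r - int k))"
    unfolding Sj_def PB_sum phi_psi[OF e] by simp
  also have "\<dots> = (\<Sum>k\<in>{1..r}. Sj e (Bk k) n j + (int r - 1) * Sj e (Bk k) n 0
   + (int r - int k) * (snd (y ! (k-1)) - n * int e))"
  proof (rule sum.cong[OF refl])
    fix k assume k: "k \<in> {1..r}"
    show "(\<Sum>b\<in>Bk k \<inter> {n * int e..}. (b - j) div int e + (int r - 1) * (b div int e) + (int r - int k))
      = Sj e (Bk k) n j + (int r - 1) * Sj e (Bk k) n 0 + (int r - int k) * (snd (y ! (k-1)) - n * int e)"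
      unfolding Sj_def sum.distrib sum_distrib_left[symmetric] using card_k[OF k] by (simp add: mult.commute)
  qed
  finally show ?thesis .
qed

end

lemma block_Psi: assumes e: "e > 0" and r: "r > 0" and vy: "valid_multi r y" and vy': "valid_multi r y'"
  and s: "map snd y = map snd y'" and R: "sum_list (map (res_mset e) y) = sum_list (map (res_mset e) y')"
  shows "snd (Psi e r y) = snd (Psi e r y')" "res_mset e (Psi e r y) = res_mset e (Psi e r y')"
proof -
  have ly: "length y = r" "length y' = r" using vy vy' unfolding valid_multi_def by auto
  have "\<forall>c\<in>set (y @ y'). valid_conf c" using vy vy' unfolding valid_multi_def by auto
  then obtain n where n: "\<forall>c\<in>set (y @ y'). cutctx e c n" using cut_list[OF e] by blast
  have "\<forall>k\<in>{1..r}. cutctx e (y ! (k - 1)) n" "\<forall>k\<in>{1..r}. cutctx e (y' ! (k - 1)) n"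
    using n ly by auto
  then interpret P: psictx e r y n + P': psictx e r y' n
    using e r vy vy' by (auto simp: psictx_def)
  have sk: "snd (y ! (k-1)) = snd (y' ! (k-1))" if "k \<in> {1..r}" for k
    using arg_cong[OF s, of "\<lambda>l. l ! (k-1)"] that ly by auto
  show sP: "snd (Psi e r y) = snd (Psi e r y')" using P.charge P'.charge sk by simp
  have T: "(\<Sum>k\<in>{1..r}. Sj e (P.Bk k) n j) = (\<Sum>k\<in>{1..r}. Sj e (P'.Bk k) n j)" if j: "0 \<le> j" "j < int e" for j
  proof -
    have "(\<Sum>k\<in>{1..r}. Sj e (P.Bk k) n j) = (\<Sum>k\<in>{1..r}. int (count (res_mset e (y ! (k-1))) j)
        + (\<Sum>p\<in>{n * int e..<snd (y ! (k-1))}. cnt e j p))"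
    proof (rule sum.cong[OF refl])
      fix k assume "k \<in> {1..r}"
      then have ck: "cutctx e (y ! (k-1)) n" using P.cut by blast
      show "Sj e (P.Bk k) n j = int (count (res_mset e (y ! (k-1))) j) + (\<Sum>p\<in>{n * int e..<snd (y ! (k-1))}. cnt e j p)"
        using cutctx.F1[OF ck j] by linarith
    qed
    also have "\<dots> = int (count (sum_list (map (res_mset e) y)) j) + (\<Sum>k\<in>{1..r}. (\<Sum>p\<in>{n * int e..<snd (y ! (k-1))}. cnt e j p))"
      unfolding sum_list_nth1 count_sum ly by (simp add: sum.distrib)
    also have "\<dots> = int (count (sum_list (map (res_mset e) y')) j) + (\<Sum>k\<in>{1..r}. (\<Sum>p\<in>{n * int e..<snd (y' ! (k-1))}. cnt e j p))"
      using R sk by simp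
    also have "\<dots> = (\<Sum>k\<in>{1..r}. int (count (res_mset e (y' ! (k-1))) j)
        + (\<Sum>p\<in>{n * int e..<snd (y' ! (k-1))}. cnt e j p))"
      unfolding sum_list_nth1 count_sum ly by (simp add: sum.distrib)
    also have "\<dots> = (\<Sum>k\<in>{1..r}. Sj e (P'.Bk k) n j)"
    proof (rule sum.cong[OF refl])
      fix k assume "k \<in> {1..r}"
      then have ck: "cutctx e (y' ! (k-1)) n" using P'.cut by blast
      show "int (count (res_mset e (y' ! (k-1))) j) + (\<Sum>p\<in>{n * int e..<snd (y' ! (k-1))}. cnt e j p) = Sj e (P'.Bk k) n j"
        using cutctx.F1[OF ck j] by linarith
    qed
    finally show ?thesis .
  qed
  have SP: "Sj e (PB e r y) (n * int r) j = Sj e (PB e r y') (n * int r) j" if j: "0 \<le> j" "j < int e" for j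
  proof -
    have "(\<Sum>k\<in>{1..r}. (int r - int k) * (snd (y ! (k-1)) - n * int e)) = (\<Sum>k\<in>{1..r}. (int r - int k) * (snd (y' ! (k-1)) - n * int e))"
      using sk by (intro sum.cong) auto
    then show ?thesis unfolding P.Sj_PB P'.Sj_PB sum.distrib sum_distrib_left[symmetric]
      using T[OF j] T[of 0] e by simp
  qed
  show "res_mset e (Psi e r y) = res_mset e (Psi e r y')"
  proof (rule res_eqI[OF e])
    fix j :: int assume j: "0 \<le> j" "j < int e"
    have "int (count (res_mset e (Psi e r y)) j) = int (count (res_mset e (Psi e r y')) j)"
      using cutctx.F1[OF P.cP j] cutctx.F1[OF P'.cP j] SP[OF j] sP Psi_conf(2)[OF e r vy] Psi_conf(2)[OF e r vy'] by simp
    then show "count (res_mset e (Psi e r y)) j = count (res_mset e (Psi e r y')) j" by simp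
  qed
qed

lemma psi_sig: assumes e: "e > 0"
  shows "psi e r k (sig e (\<lambda>i. int i * M) b) = sig e (\<lambda>i. int i * (M * int r)) (psi e r k b)"
proof -
  define X where "X = int (nat (b mod int e)) * M"
  have ne: "int e \<noteq> 0" using e by simp
  have sb: "sig e (\<lambda>i. int i * M) b = b + int e * X" unfolding sig_def X_def by simp
  have d: "(b + int e * X) div int e = b div int e + X"
    using div_mult_self2[OF ne, of b X] by (simp add: mult.commute)
  have m: "(b + int e * X) mod int e = b mod int e" by simp
  have pm: "nat (psi e r k b mod int e) = nat (b mod int e)" using psi_mod[OF e] by simp
  have l: "psi e r k (b + int e * X) = ((b div int e + X + 1) * int r - int k) * int e + b mod int e"
    unfolding psi_def d m by simp
  have rr: "sig e (\<lambda>i. int i * (M * int r)) (psi e r k b) = psi e r k b + int e * (int (nat (b mod int e)) * (M * int r))"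
    unfolding sig_def pm by simp
  have p: "psi e r k b = ((b div int e + 1) * int r - int k) * int e + b mod int e" unfolding psi_def by simp
  have "psi e r k (sig e (\<lambda>i. int i * M) b) = psi e r k (b + int e * X)" by (simp only: sb)
  also have "\<dots> = ((b div int e + X + 1) * int r - int k) * int e + b mod int e" by (rule l)
  also have "\<dots> = psi e r k b + int e * (int (nat (b mod int e)) * (M * int r))"
    unfolding p X_def by (simp add: algebra_simps)
  also have "\<dots> = sig e (\<lambda>i. int i * (M * int r)) (psi e r k b)" by (rule rr[symmetric])
  finally show ?thesis .
qed

lemma str_multi_props: assumes e: "e > 0" and v: "valid_multi r y"
  shows "valid_multi r (str_multi e Ms y)" "\<And>k. k \<in> {1..r} \<Longrightarrow> str_multi e Ms y ! (k-1) = str1 e Ms (y ! (k-1))"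
proof -
  have ly: "length y = r" and vy: "\<forall>c\<in>set y. valid_conf c" using v unfolding valid_multi_def by auto
  show "valid_multi r (str_multi e Ms y)" unfolding valid_multi_def str_multi_def
    using ly vy str1_eq(1)[OF e] by auto
  fix k assume "k \<in> {1..r}" then show "str_multi e Ms y ! (k-1) = str1 e Ms (y ! (k-1))"
    unfolding str_multi_def using ly by auto
qed

lemma PB_str: assumes e: "e > 0" and v: "valid_multi r y"
  shows "PB e r (str_multi e (\<lambda>i. int i * M) y) = sig e (\<lambda>i. int i * (M * int r)) ` PB e r y"
proof -
  have ly: "length y = r" and vy: "\<forall>c\<in>set y. valid_conf c" using v unfolding valid_multi_def by auto
  have cb: "conf_beta (str_multi e (\<lambda>i. int i * M) y ! (k-1)) = sig e (\<lambda>i. int i * M) ` conf_beta (y ! (k-1))"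
    if "k \<in> {1..r}" for k
  proof -
    have "y ! (k-1) \<in> set y" using that ly by auto
    then show ?thesis using str_multi_props(2)[OF e v that] str1_eq(2)[OF e] vy by auto
  qed
  have "PB e r (str_multi e (\<lambda>i. int i * M) y) = (\<Union>k\<in>{1..r}. psi e r k ` sig e (\<lambda>i. int i * M) ` conf_beta (y ! (k - 1)))"
    unfolding PB_def using cb by auto
  also have "\<dots> = (\<Union>k\<in>{1..r}. sig e (\<lambda>i. int i * (M * int r)) ` psi e r k ` conf_beta (y ! (k - 1)))"
    by (simp add: image_image psi_sig[OF e])
  also have "\<dots> = sig e (\<lambda>i. int i * (M * int r)) ` PB e r y"
    unfolding PB_def by (simp add: image_UN)
  finally show ?thesis .
qed

lemma Psi_str: assumes e: "e > 0" and r: "r > 0" and v: "valid_multi r y"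
  shows "Psi e r (str_multi e (\<lambda>i. int i * M) y) = str1 e (\<lambda>i. int i * (M * int r)) (Psi e r y)"
proof -
  have vs: "valid_multi r (str_multi e (\<lambda>i. int i * M) y)" by (rule str_multi_props(1)[OF e v])
  have vP: "valid_conf (Psi e r y)" by (rule Psi_conf(1)[OF e r v])
  show ?thesis
  proof (rule conf_beta_inj)
    show "valid_conf (Psi e r (str_multi e (\<lambda>i. int i * M) y))" by (rule Psi_conf(1)[OF e r vs])
    show "valid_conf (str1 e (\<lambda>i. int i * (M * int r)) (Psi e r y))" by (rule str1_eq(1)[OF e vP])
    show "conf_beta (Psi e r (str_multi e (\<lambda>i. int i * M) y)) = conf_beta (str1 e (\<lambda>i. int i * (M * int r)) (Psi e r y))"
      unfolding Psi_conf(2)[OF e r vs] str1_eq(2)[OF e vP] Psi_conf(2)[OF e r v] PB_str[OF e v] ..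
  qed
qed

lemma str_eta: assumes e: "e > 0" and v: "valid_conf c"
  shows "\<And>i. i < e \<Longrightarrow> snd (eta e (str1 e Ms c) ! i) = snd (eta e c ! i) + Ms i" "wt e (str1 e Ms c) = wt e c"
proof -
  fix i assume "i < e" then show "snd (eta e (str1 e Ms c) ! i) = snd (eta e c ! i) + Ms i"
    using str1_eq(3)[OF e v, of Ms] by simp
next
  have "(\<Sum>i<e. int (part_size (fst (eta e (str1 e Ms c) ! i)))) = (\<Sum>i<e. int (part_size (fst (eta e c ! i))))"
    using str1_eq(3)[OF e v, of Ms] by (intro sum.cong) auto
  then show "wt e (str1 e Ms c) = wt e c" using wt_sum[of e "str1 e Ms c"] wt_sum[of e c] by simp
qed

lemma rouq_mono: "rouquier_r e 1 w \<Longrightarrow> 1 \<le> r \<Longrightarrow> rouquier_r e r w"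
  unfolding rouquier_r_def by force

theorem lemma3p8:
  fixes e r :: nat and x :: "config list"
  assumes "e \<ge> 2" and "r \<ge> 1" and "valid_multi r x"
  shows "\<exists>Mstar::int. \<forall>M::int. M \<ge> Mstar \<longrightarrow>
           (\<forall>y\<in>Psi e r ` str_multi e (\<lambda>i. int i * M) ` block_multi e r x. rouquier e y) \<and>
           (\<exists>C. is_rRouquier_block e r C \<and>
                Psi e r ` str_multi e (\<lambda>i. int i * M) ` block_multi e r x \<subseteq> C)"
proof -
  have e: "e > 0" and r: "r > 0" using assms by auto
  note vx = assms(3)
  define z0 where "z0 = Psi e r x"
  have vz0: "valid_conf z0" unfolding z0_def by (rule Psi_conf(1)[OF e r vx])
  define t0 where "t0 i = snd (eta e z0 ! i)" for i
  define Mstar where "Mstar = int (wt e z0) + (\<Sum>i<e. \<bar>t0 i\<bar>)"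
  show ?thesis
  proof (intro exI[of _ Mstar] allI impI)
    fix M :: int assume M: "Mstar \<le> M"
    define Ms' where "Ms' = (\<lambda>i::nat. int i * (M * int r))"
    define z where "z = str1 e Ms' z0"
    have zP: "Psi e r (str_multi e (\<lambda>i. int i * M) x) = z"
      unfolding z_def Ms'_def z0_def by (rule Psi_str[OF e r vx])
    have vz: "valid_conf z" unfolding z_def by (rule str1_eq(1)[OF e vz0])
    have tz: "snd (eta e z ! i) = t0 i + Ms' i" if "i < e" for i
      unfolding z_def t0_def by (rule str_eta(1)[OF e vz0 that])
    have wz: "wt e z = wt e z0" unfolding z_def by (rule str_eta(2)[OF e vz0])
    define C where "C = block1 e z"
    have rq: "rouquier_r e 1 w" if "w \<in> C" for w
    proof -
      have vw: "valid_conf w" and eq: "multi_equiv e [z] [w]" using that unfolding C_def block1_def by auto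
      have sw: "snd z = snd w" and rw: "res_mset e z = res_mset e w" using eq unfolding multi_equiv_def by auto
      have tw: "\<forall>i<e. snd (eta e z ! i) = snd (eta e w ! i)" and ww: "wt e z = wt e w"
        using E1[OF e vz vw sw rw] by auto
      show ?thesis unfolding rouquier_r_def
      proof (intro allI impI)
        fix i assume i: "i + 1 < e"
        have "\<bar>t0 i\<bar> + \<bar>t0 (Suc i)\<bar> = (\<Sum>j\<in>{i, Suc i}. \<bar>t0 j\<bar>)" by simp
        also have "\<dots> \<le> (\<Sum>j<e. \<bar>t0 j\<bar>)" using i by (intro sum_mono2) auto
        finally have "int (wt e z0) + \<bar>t0 i\<bar> + \<bar>t0 (Suc i)\<bar> \<le> M" using M unfolding Mstar_def by simp
        moreover have "M \<ge> 0" using M unfolding Mstar_def by (smt (verit) of_nat_0_le_iff sum_nonneg abs_ge_zero)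
        moreover have "M \<le> M * int r" using r \<open>M \<ge> 0\<close> by (simp add: mult_le_cancel_left1)
        moreover have "Ms' (i + 1) - Ms' i = M * int r" unfolding Ms'_def by (simp add: algebra_simps)
        ultimately have "int (wt e z0) \<le> (t0 (i+1) + Ms' (i+1)) - (t0 i + Ms' i) + 1" by simp
        then show "int (wt e w) \<le> snd (eta e w ! (i + 1)) - snd (eta e w ! i) + int 1"
          using tw tz[of i] tz[of "i+1"] i wz ww by simp
      qed
    qed
    have sub: "Psi e r ` str_multi e (\<lambda>i. int i * M) ` block_multi e r x \<subseteq> C"
    proof
      fix w assume "w \<in> Psi e r ` str_multi e (\<lambda>i. int i * M) ` block_multi e r x"
      then obtain y where y: "y \<in> block_multi e r x" "w = Psi e r (str_multi e (\<lambda>i. int i * M) y)" by auto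
      have vy: "valid_multi r y" and eqy: "multi_equiv e x y" using y(1) unfolding block_multi_def by auto
      have wP: "w = str1 e Ms' (Psi e r y)" unfolding y(2) Ms'_def by (rule Psi_str[OF e r vy])
      have vPy: "valid_conf (Psi e r y)" by (rule Psi_conf(1)[OF e r vy])
      have vw: "valid_conf w" unfolding wP by (rule str1_eq(1)[OF e vPy])
      have s1: "snd z0 = snd (Psi e r y)" "res_mset e z0 = res_mset e (Psi e r y)"
        using block_Psi[OF e r vx vy] eqy unfolding multi_equiv_def z0_def by auto
      have t1: "\<forall>i<e. snd (eta e z0 ! i) = snd (eta e (Psi e r y) ! i)" and w1: "wt e z0 = wt e (Psi e r y)"
        using E1[OF e vz0 vPy s1] by auto
      have t2: "\<forall>i<e. snd (eta e z ! i) = snd (eta e w ! i)"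
        using t1 str_eta(1)[OF e vz0] str_eta(1)[OF e vPy] unfolding z_def wP by simp
      have w2: "wt e z = wt e w" using w1 str_eta(2)[OF e vz0] str_eta(2)[OF e vPy] unfolding z_def wP by simp
      have s2: "snd z = snd w" "res_mset e z = res_mset e w" using E2[OF e vz vw t2 w2] by auto
      have "part_size (fst z) = part_size (fst w)" using s2(2) size_res[of e z] size_res[of e w] by metis
      then have "multi_equiv e [z] [w]" using s2 unfolding multi_equiv_def by simp
      then show "w \<in> C" using vw unfolding C_def block1_def by simp
    qed
    have blk: "is_rRouquier_block e r C"
      unfolding is_rRouquier_block_def using vz rq rouq_mono assms(2) C_def by blast
    show "(\<forall>y\<in>Psi e r ` str_multi e (\<lambda>i. int i * M) ` block_multi e r x. rouquier e y) \<and>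
           (\<exists>C. is_rRouquier_block e r C \<and> Psi e r ` str_multi e (\<lambda>i. int i * M) ` block_multi e r x \<subseteq> C)"
      using sub blk rq unfolding rouquier_def by blast
  qed
qed

end
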